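(* Let $\mathcal{W}$ be a periodic labeled wedge of period $p$ and preperiod $q$, with associated graph $\Gamma$, and for $k\in\mathbb{N}$ let $A_k$ be the adjacency operator of $\Gamma_k=\Gamma/\equiv_{kp,q}$. Then for every $k\in\mathbb{N}$, the characteristic polynomial of $A_k$ acting on $\mathbb{R}^{\mathcal{V}_k}$ is the product of the characteristic polynomial of $A_1$ acting on $\mathbb{R}^{\mathcal{V}_1}$, of cyclotomic polynomials, and of $x^d$ for some integer $d\ge0$.
   Context: The unlabeled wedge is $\Sigma=\{(i,j)\in\mathbb{N}^2:1\le i\le j\}$; a labeled wedge is a map $\Phi:\Sigma\to\{N,S,E\}$ (non-separated, separated, equivalent). Its graph $\Gamma$ has vertex set $\Sigma$ and edges: none out of an $E$-vertex; one edge $(i,j)\to(i+1,j+1)$ out of an $N$-vertex; two edges $(i,j)\to(1,i+1)$ and $(i,j)\to(1,j+1)$ out of an $S$-vertex. For integers $p\ge1$, $q\ge0$, $\equiv_{p,q}$ on $\mathbb{N}$ is: $i\equiv_{p,q}j$ iff $i=j$, or $\min\{i,j\}\ge q+1$ and $i\equiv j\pmod p$; on $\Sigma$, $(i,j)\equiv_{p,q}(k,l)$ iff ($i\equiv_{p,q}k$ and $j\equiv_{p,q}l$) or ($i\equiv_{p,q}l$ and $j\equiv_{p,q}k$). $\mathcal{W}$ is periodic of period $p$ and preperiod $q$ if (1) $\equiv_{p,q}$-equivalent vertices have the same label and (2) $(i,j)$ is labeled $E$ iff $i\equiv_{p,q}j$. For such $\mathcal{W}$ and $k\ge1$, $\Gamma_k$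 is the quotient graph: its vertex set $\mathcal{V}_k$ is the set of $\equiv_{kp,q}$-classes, and the number of edges from $[v]$ to $[w]$ is the number of edges in $\Gamma$ from $v$ to members of $[w]$ (independent of the representative $v$). The adjacency operator $A_k$ on $\mathbb{R}^{\mathcal{V}_k}$ is $A_k(e_v)=\sum_{w}\#(v\to w)\,e_w$. Characteristic polynomials are $\det(xI-A)$. *)

theory Defs
  imports "Jordan_Normal_Form.Char_Poly" "HOL-Computational_Algebra.Polynomial"
begin

datatype label = N | S | E

definition wedge :: "(nat \<times> nat) set" where
  "wedge = {(i,j). 1 \<le> i \<and> i \<le> j}"

definition eqv_nat :: "nat \<Rightarrow> nat \<Rightarrow> nat \<Rightarrow> nat \<Rightarrow> bool" where
  "eqv_nat p q i j \<longleftrightarrow> i = j \<or> (min i j \<ge> q + 1 \<and> i mod p = j mod p)"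

definition eqv_wedge :: "nat \<Rightarrow> nat \<Rightarrow> nat \<times> nat \<Rightarrow> nat \<times> nat \<Rightarrow> bool" where
  "eqv_wedge p q v w \<longleftrightarrow>
     (eqv_nat p q (fst v) (fst w) \<and> eqv_nat p q (snd v) (snd w)) \<or>
     (eqv_nat p q (fst v) (snd w) \<and> eqv_nat p q (snd v) (fst w))"

text \<open>A labeled wedge is a map Sigma -> {N,S,E}; values outside Sigma are irrelevant.
  Periodicity with period p and preperiod q.\<close>
definition periodic_wedge :: "((nat \<times> nat) \<Rightarrow> label) \<Rightarrow> nat \<Rightarrow> nat \<Rightarrow> bool" where
  "periodic_wedge \<Phi> p q \<longleftrightarrow> p \<ge> 1 \<and>
     (\<forall>v\<in>wedge. \<forall>w\<in>wedge. eqv_wedge p q v w \<longrightarrow> \<Phi> v = \<Phi> w) \<and>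
     (\<forall>(i,j)\<in>wedge. \<Phi> (i,j) = E \<longleftrightarrow> eqv_nat p q i j)"

text \<open>Targets of the edges of the graph Gamma out of a vertex (as a list, with multiplicity).\<close>
definition edge_targets :: "((nat \<times> nat) \<Rightarrow> label) \<Rightarrow> nat \<times> nat \<Rightarrow> (nat \<times> nat) list" where
  "edge_targets \<Phi> v = (case \<Phi> v of
       E \<Rightarrow> []
     | N \<Rightarrow> [(fst v + 1, snd v + 1)]
     | S \<Rightarrow> [(1, fst v + 1), (1, snd v + 1)])"

definition wclass :: "nat \<Rightarrow> nat \<Rightarrow> nat \<times> nat \<Rightarrow> (nat \<times> nat) set" where
  "wclass p q v = {w \<in> wedge. eqv_wedge p q v w}"

definition quot_vertices :: "nat \<Rightarrow> nat \<Rightarrow> (nat \<times> nat) set set" where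
  "quot_vertices p q = wclass p q ` wedge"

definition quot_edges :: "((nat \<times> nat) \<Rightarrow> label) \<Rightarrow> (nat \<times> nat) set \<Rightarrow> (nat \<times> nat) set \<Rightarrow> nat" where
  "quot_edges \<Phi> C D = length (filter (\<lambda>t. t \<in> D) (edge_targets \<Phi> (SOME v. v \<in> C)))"

text \<open>Matrix of the adjacency operator A (A e_C = sum_D #(C->D) e_D), i.e. column C has
  entries #(C->D), w.r.t. an (arbitrary) enumeration of the finite vertex set.\<close>
definition vertex_enum :: "nat \<Rightarrow> nat \<Rightarrow> nat \<Rightarrow> (nat \<times> nat) set" where
  "vertex_enum p q = (SOME f. bij_betw f {..<card (quot_vertices p q)} (quot_vertices p q))"

definition adj_matrix :: "((nat \<times> nat) \<Rightarrow> label) \<Rightarrow> nat \<Rightarrow> nat \<Rightarrow> real mat" where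
  "adj_matrix \<Phi> p q = (let n = card (quot_vertices p q); f = vertex_enum p q in
     mat n n (\<lambda>(r, c). real (quot_edges \<Phi> (f c) (f r))))"

definition cyclotomic :: "nat \<Rightarrow> complex poly" where
  "cyclotomic n = (\<Prod>j\<in>{j. j < n \<and> coprime j n}. [:- cis (2 * pi * real j / real n), 1:])"

end

theory Submission
  imports Defs
begin


definition enumX :: "'a set \<Rightarrow> nat \<Rightarrow> 'a" where
  "enumX X = (SOME f. bij_betw f {..<card X} X)"

definition matX :: "'a set \<Rightarrow> ('a \<Rightarrow> 'a \<Rightarrow> 'b) \<Rightarrow> 'b mat" where
  "matX X M = mat (card X) (card X) (\<lambda>(i,j). M (enumX X i) (enumX X j))"

definition cp :: "'a set \<Rightarrow> ('a \<Rightarrow> 'a \<Rightarrow> complex) \<Rightarrow> complex poly" where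
  "cp X M = char_poly (matX X M)"

lemma enumX_bij: "finite X \<Longrightarrow> bij_betw (enumX X) {..<card X} X"
proof -
  assume "finite X"
  then have "\<exists>f. bij_betw f {..<card X} X" using ex_bij_betw_nat_finite[of X] by (simp add: atLeast0LessThan)
  then show ?thesis unfolding enumX_def by (rule someI_ex)
qed

lemma sum_bij_delta:
  assumes "bij_betw h {..<(n::nat)} X" "x \<in> X"
  shows "(\<Sum>k<n. if h k = x then f k else (0::'b::comm_monoid_add)) = f (inv_into {..<n} h x)"
proof -
  define m where "m = inv_into {..<n} h x"
  have k: "m < n" "h m = x" using assms unfolding m_def
    by (auto simp: bij_betw_def intro: inv_into_into f_inv_into_f)
  have "(\<Sum>k<n. if h k = x then f k else 0) = (\<Sum>k<n. if k = m then f k else 0)"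
  proof (rule sum.cong[OF refl])
    fix k assume "k \<in> {..<n}"
    then have "h k = x \<longleftrightarrow> k = m" using assms k
      by (metis bij_betw_def inj_on_def lessThan_iff)
    then show "(if h k = x then f k else 0) = (if k = m then f k else 0)" by simp
  qed
  also have "\<dots> = f m" using k(1) by simp
  finally show ?thesis unfolding m_def .
qed

lemma char_poly_bij_indep:
  fixes M :: "'a \<Rightarrow> 'a \<Rightarrow> 'b::comm_ring_1"
  assumes g: "bij_betw g {..<n} X" and h: "bij_betw h {..<n} X"
  shows "char_poly (mat n n (\<lambda>(i,j). M (g i) (g j))) = char_poly (mat n n (\<lambda>(i,j). M (h i) (h j)))"
proof -
  define P :: "'b mat" where "P = mat n n (\<lambda>(i,j). if g i = h j then 1 else 0)"
  define Q :: "'b mat" where "Q = mat n n (\<lambda>(i,j). if h i = g j then 1 else 0)"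
  define A where "A = mat n n (\<lambda>(i,j). M (g i) (g j))"
  define B where "B = mat n n (\<lambda>(i,j). M (h i) (h j))"
  have gi: "\<And>i. i < n \<Longrightarrow> g i \<in> X" using g by (auto simp: bij_betw_def)
  have hi: "\<And>i. i < n \<Longrightarrow> h i \<in> X" using h by (auto simp: bij_betw_def)
  have ginj: "\<And>i j. i < n \<Longrightarrow> j < n \<Longrightarrow> g i = g j \<longleftrightarrow> i = j"
    using g by (auto simp: bij_betw_def inj_on_def)
  have hinj: "\<And>i j. i < n \<Longrightarrow> j < n \<Longrightarrow> h i = h j \<longleftrightarrow> i = j"
    using h by (auto simp: bij_betw_def inj_on_def)
  have PQ: "P * Q = 1\<^sub>m n"
  proof (rule eq_matI)
    fix i j assume ij: "i < dim_row (1\<^sub>m n :: 'b mat)" "j < dim_col (1\<^sub>m n :: 'b mat)"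
    have "(P * Q) $$ (i,j) = (\<Sum>k<n. if h k = g i then (if h k = g j then 1 else 0) else 0)"
      using ij by (auto simp: P_def Q_def scalar_prod_def atLeast0LessThan intro!: sum.cong)
    also have "\<dots> = (if h (inv_into {..<n} h (g i)) = g j then 1 else 0)"
      by (rule sum_bij_delta[OF h gi]) (use ij in auto)
    also have "\<dots> = (if i = j then 1 else 0)"
      using ij gi[of i] h ginj by (simp add: bij_betw_def f_inv_into_f)
    finally show "(P * Q) $$ (i,j) = 1\<^sub>m n $$ (i,j)" using ij by simp
  qed (auto simp: P_def Q_def)
  have QP: "Q * P = 1\<^sub>m n"
  proof (rule eq_matI)
    fix i j assume ij: "i < dim_row (1\<^sub>m n :: 'b mat)" "j < dim_col (1\<^sub>m n :: 'b mat)"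
    have "(Q * P) $$ (i,j) = (\<Sum>k<n. if g k = h i then (if g k = h j then 1 else 0) else 0)"
      using ij by (auto simp: P_def Q_def scalar_prod_def atLeast0LessThan intro!: sum.cong)
    also have "\<dots> = (if g (inv_into {..<n} g (h i)) = h j then 1 else 0)"
      by (rule sum_bij_delta[OF g hi]) (use ij in auto)
    also have "\<dots> = (if i = j then 1 else 0)"
      using ij hi[of i] g hinj by (simp add: bij_betw_def f_inv_into_f)
    finally show "(Q * P) $$ (i,j) = 1\<^sub>m n $$ (i,j)" using ij by simp
  qed (auto simp: P_def Q_def)
  have APBQ: "A = P * B * Q"
  proof (rule eq_matI)
    fix i j assume ij: "i < dim_row (P * B * Q)" "j < dim_col (P * B * Q)"
    then have ij': "i < n" "j < n" by (auto simp: P_def Q_def)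
    have "(P * B * Q) $$ (i,j) = (\<Sum>l<n. (P * B) $$ (i,l) * Q $$ (l,j))"
      using ij' by (auto simp: P_def Q_def B_def scalar_prod_def atLeast0LessThan)
    also have "\<dots> = (\<Sum>l<n. if h l = g j then (P * B) $$ (i,l) else 0)"
      by (rule sum.cong) (auto simp: Q_def ij')
    also have "\<dots> = (P * B) $$ (i, inv_into {..<n} h (g j))"
      by (rule sum_bij_delta[OF h gi[OF ij'(2)]])
    also have "\<dots> = (\<Sum>k<n. if h k = g i then B $$ (k, inv_into {..<n} h (g j)) else 0)"
      using ij' inv_into_into[of "g j" h "{..<n}"] gi[of j] h
      by (auto simp: P_def B_def scalar_prod_def atLeast0LessThan bij_betw_def intro!: sum.cong)
    also have "\<dots> = B $$ (inv_into {..<n} h (g i), inv_into {..<n} h (g j))"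
      by (rule sum_bij_delta[OF h gi[OF ij'(1)]])
    also have "\<dots> = M (g i) (g j)"
      using ij' gi h inv_into_into[of "g j" h "{..<n}"] inv_into_into[of "g i" h "{..<n}"]
      by (auto simp: B_def bij_betw_def f_inv_into_f)
    finally show "A $$ (i,j) = (P * B * Q) $$ (i,j)" using ij' by (simp add: A_def)
  qed (auto simp: A_def P_def Q_def)
  have car: "A \<in> carrier_mat n n" "B \<in> carrier_mat n n" "P \<in> carrier_mat n n" "Q \<in> carrier_mat n n"
    by (auto simp: A_def B_def P_def Q_def)
  have "similar_mat_wit A B P Q"
  proof -
    have "dim_row A = n" using car(1) by simp
    then show ?thesis unfolding similar_mat_wit_def Let_def
      using PQ QP APBQ car by (simp only: insert_subset empty_subsetI simp_thms)
  qed
  then have "similar_mat A B" unfolding similar_mat_def by blast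
  from char_poly_similar[OF this] show ?thesis unfolding A_def B_def .
qed

lemma cp_bij:
  assumes "finite X" "bij_betw g {..<n} X"
  shows "char_poly (mat n n (\<lambda>(i,j). M (g i) (g j))) = cp X M"
proof -
  have n: "n = card X" using assms(2) by (metis bij_betw_same_card card_lessThan)
  show ?thesis unfolding cp_def matX_def n
    by (rule char_poly_bij_indep[OF assms(2)[unfolded n] enumX_bij[OF assms(1)]])
qed

lemma cp_cong:
  assumes "\<And>x y. x \<in> X \<Longrightarrow> y \<in> X \<Longrightarrow> M y x = M' y x" "finite X"
  shows "cp X M = cp X M'"
proof -
  have "matX X M = matX X M'"
    unfolding matX_def using enumX_bij[OF assms(2)] assms(1)
    by (intro eq_matI) (auto simp: bij_betw_def)
  then show ?thesis by (simp add: cp_def)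
qed

lemma matX_carrier[simp]: "matX X M \<in> carrier_mat (card X) (card X)"
  by (simp add: matX_def)

lemma matX_index: "i < card X \<Longrightarrow> j < card X \<Longrightarrow> matX X M $$ (i,j) = M (enumX X i) (enumX X j)"
  by (simp add: matX_def)

lemma matX_cong:
  assumes "finite X" "\<And>x y. x \<in> X \<Longrightarrow> y \<in> X \<Longrightarrow> M y x = M' y x"
  shows "matX X M = matX X M'"
  unfolding matX_def using enumX_bij[OF assms(1)] assms(2)
  by (intro eq_matI) (auto simp: bij_betw_def)

lemma char_poly_four_block:
  fixes A1 :: "'a::idom mat"
  assumes A1: "A1 \<in> carrier_mat n1 n1" and A2: "A2 \<in> carrier_mat n2 n2" and B: "B \<in> carrier_mat n1 n2"
  shows "char_poly (four_block_mat A1 B (0\<^sub>m n2 n1) A2) = char_poly A1 * char_poly A2"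
proof -
  have "char_poly_matrix (four_block_mat A1 B (0\<^sub>m n2 n1) A2) =
    four_block_mat (char_poly_matrix A1) (map_mat (\<lambda>a. [:- a:]) B) (0\<^sub>m n2 n1) (char_poly_matrix A2)"
    using A1 A2 B by (intro eq_matI) (auto simp: char_poly_matrix_def)
  moreover have "det (four_block_mat (char_poly_matrix A1) (map_mat (\<lambda>a. [:- a:]) B) (0\<^sub>m n2 n1) (char_poly_matrix A2))
     = det (char_poly_matrix A1) * det (char_poly_matrix A2)"
    by (rule det_four_block_mat_lower_left_zero) (use A1 A2 B in auto)
  ultimately show ?thesis by (simp add: char_poly_def)
qed

lemma cp_block:
  assumes fin: "finite X1" "finite X2" and disj: "X1 \<inter> X2 = {}"
    and z: "\<And>x y. x \<in> X1 \<Longrightarrow> y \<in> X2 \<Longrightarrow> M y x = 0"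
  shows "cp (X1 \<union> X2) M = cp X1 M * cp X2 M"
proof -
  define n1 where "n1 = card X1"
  define n2 where "n2 = card X2"
  define e1 where "e1 = enumX X1"
  define e2 where "e2 = enumX X2"
  have b1: "bij_betw e1 {..<n1} X1" unfolding e1_def n1_def by (rule enumX_bij[OF fin(1)])
  have b2: "bij_betw e2 {..<n2} X2" unfolding e2_def n2_def by (rule enumX_bij[OF fin(2)])
  define g where "g i = (if i < n1 then e1 i else e2 (i - n1))" for i
  have b2': "bij_betw (\<lambda>i. e2 (i - n1)) {n1..<n1+n2} X2"
  proof -
    have "bij_betw (\<lambda>i. i - n1) {n1..<n1+n2} {..<n2}"
      by (rule bij_betwI[where g="\<lambda>i. i + n1"]) auto
    from bij_betw_trans[OF this b2] show ?thesis by (simp add: comp_def)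
  qed
  have "bij_betw g ({..<n1} \<union> {n1..<n1+n2}) (X1 \<union> X2)"
  proof (rule bij_betw_combine[OF _ _ disj])
    show "bij_betw g {..<n1} X1" using b1 by (rule bij_betw_cong[THEN iffD1, rotated]) (auto simp: g_def)
    show "bij_betw g {n1..<n1+n2} X2" using b2' by (rule bij_betw_cong[THEN iffD1, rotated]) (auto simp: g_def)
  qed
  moreover have "{..<n1} \<union> {n1..<n1+n2} = {..<n1+n2}" by auto
  ultimately have bg: "bij_betw g {..<n1+n2} (X1 \<union> X2)" by simp
  have e1X: "\<And>i. i < n1 \<Longrightarrow> e1 i \<in> X1" using b1 by (auto simp: bij_betw_def)
  have e2X: "\<And>i. i < n2 \<Longrightarrow> e2 i \<in> X2" using b2 by (auto simp: bij_betw_def)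
  define B where "B = mat n1 n2 (\<lambda>(i,j). M (e1 i) (e2 j))"
  have "mat (n1+n2) (n1+n2) (\<lambda>(i,j). M (g i) (g j)) = four_block_mat (matX X1 M) B (0\<^sub>m n2 n1) (matX X2 M)"
    by (intro eq_matI)
       (auto simp: g_def B_def matX_def n1_def[symmetric] n2_def[symmetric] e1_def[symmetric] e2_def[symmetric]
         intro!: z e1X e2X)
  then have "cp (X1 \<union> X2) M = char_poly (four_block_mat (matX X1 M) B (0\<^sub>m n2 n1) (matX X2 M))"
    using cp_bij[OF _ bg, of M] fin by simp
  also have "\<dots> = cp X1 M * cp X2 M"
    unfolding cp_def by (rule char_poly_four_block) (auto simp: n1_def n2_def B_def)
  finally show ?thesis .
qed

definition mm :: "'a set \<Rightarrow> ('a \<Rightarrow> 'a \<Rightarrow> 'b::comm_semiring_0) \<Rightarrow> ('a \<Rightarrow> 'a \<Rightarrow> 'b) \<Rightarrow> 'a \<Rightarrow> 'a \<Rightarrow> 'b" where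
  "mm X A B = (\<lambda>y x. \<Sum>z\<in>X. A y z * B z x)"

lemma matX_mm:
  assumes "finite X"
  shows "matX X (mm X A B) = matX X A * matX X B"
proof (rule eq_matI)
  fix i j assume ij: "i < dim_row (matX X A * matX X B)" "j < dim_col (matX X A * matX X B)"
  then have ij': "i < card X" "j < card X" by (auto simp: matX_def)
  have b: "bij_betw (enumX X) {..<card X} X" by (rule enumX_bij[OF assms])
  have "(matX X A * matX X B) $$ (i,j) = (\<Sum>k<card X. A (enumX X i) (enumX X k) * B (enumX X k) (enumX X j))"
    using ij' by (auto simp: scalar_prod_def matX_def atLeast0LessThan)
  also have "\<dots> = (\<Sum>z\<in>X. A (enumX X i) z * B z (enumX X j))"
    by (rule sum.reindex_bij_betw[OF b])
  finally show "matX X (mm X A B) $$ (i,j) = (matX X A * matX X B) $$ (i,j)"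
    using ij' by (simp add: matX_def mm_def)
qed (auto simp: matX_def)

lemma matX_id:
  assumes "finite X" "\<And>x y. x \<in> X \<Longrightarrow> y \<in> X \<Longrightarrow> I y x = (if y = x then 1 else 0)"
  shows "matX X I = 1\<^sub>m (card X)"
proof -
  have b: "bij_betw (enumX X) {..<card X} X" by (rule enumX_bij[OF assms(1)])
  then have X: "\<And>i. i < card X \<Longrightarrow> enumX X i \<in> X" by (auto simp: bij_betw_def)
  have inj: "\<And>i j. i < card X \<Longrightarrow> j < card X \<Longrightarrow> enumX X i = enumX X j \<longleftrightarrow> i = j"
    using b by (auto simp: bij_betw_def inj_on_def)
  show ?thesis unfolding matX_def
    by (intro eq_matI) (auto simp: assms(2)[OF X X] inj)
qed

lemma cp_sim:
  fixes P Q M :: "'a \<Rightarrow> 'a \<Rightarrow> complex"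
  assumes fin: "finite X"
    and PQ: "\<And>x y. x \<in> X \<Longrightarrow> y \<in> X \<Longrightarrow> mm X P Q y x = (if y = x then 1 else 0)"
    and QP: "\<And>x y. x \<in> X \<Longrightarrow> y \<in> X \<Longrightarrow> mm X Q P y x = (if y = x then 1 else 0)"
  shows "cp X (mm X (mm X P M) Q) = cp X M"
proof -
  let ?n = "card X"
  have "similar_mat_wit (matX X (mm X (mm X P M) Q)) (matX X M) (matX X P) (matX X Q)"
  proof -
    have 1: "matX X P * matX X Q = 1\<^sub>m ?n" using matX_mm[OF fin, of P Q] matX_id[OF fin PQ] by simp
    have 2: "matX X Q * matX X P = 1\<^sub>m ?n" using matX_mm[OF fin, of Q P] matX_id[OF fin QP] by simp
    have 3: "matX X (mm X (mm X P M) Q) = matX X P * matX X M * matX X Q" by (simp add: matX_mm[OF fin])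
    show ?thesis unfolding similar_mat_wit_def Let_def using 1 2 3
      by (simp add: matX_def[of X P] matX_def[of X Q] del: matX_carrier) (auto simp: matX_def intro!: mult_carrier_mat)
  qed
  then have "similar_mat (matX X (mm X (mm X P M) Q)) (matX X M)" unfolding similar_mat_def by blast
  from char_poly_similar[OF this] show ?thesis unfolding cp_def .
qed


lemma mm_assoc: "finite X \<Longrightarrow> mm X (mm X A B) C = mm X A (mm X B C)"
  unfolding mm_def
  by (auto simp: sum_distrib_left sum_distrib_right mult.assoc intro!: ext) (rule sum.swap)

lemma mm_add_left: "mm X (\<lambda>y x. A y x + B y x) C y x = mm X A C y x + mm X B C y x"
  by (simp add: mm_def distrib_right sum.distrib)
lemma mm_diff_left: "mm X (\<lambda>y x. A y x - B y x) C y x = mm X A C y x - mm X B C y x"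
  for A :: "'a \<Rightarrow> 'a \<Rightarrow> 'b::comm_ring"
  by (simp add: mm_def left_diff_distrib sum_subtractf)
lemma mm_add_right: "mm X A (\<lambda>y x. B y x + C y x) y x = mm X A B y x + mm X A C y x"
  by (simp add: mm_def distrib_left sum.distrib)
lemma mm_diff_right: "mm X A (\<lambda>y x. B y x - C y x) y x = mm X A B y x - mm X A C y x"
  for A :: "'a \<Rightarrow> 'a \<Rightarrow> 'b::comm_ring"
  by (simp add: mm_def right_diff_distrib sum_subtractf)
lemma mm_id_left: "finite X \<Longrightarrow> y \<in> X \<Longrightarrow> mm X (\<lambda>y x. if y = x then 1 else 0) B y x = B y x"
  for B :: "'a \<Rightarrow> 'a \<Rightarrow> 'b::comm_semiring_1"
proof -
  assume a: "finite X" "y \<in> X"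
  have "(\<Sum>z\<in>X. (if y = z then 1 else 0) * B z x) = (\<Sum>z\<in>X. if y = z then B z x else 0)"
    by (rule sum.cong) auto
  then show ?thesis using a by (simp add: mm_def)
qed
lemma mm_id_right: "finite X \<Longrightarrow> x \<in> X \<Longrightarrow> mm X A (\<lambda>y x. if y = x then 1 else 0) y x = A y x"
  for A :: "'a \<Rightarrow> 'a \<Rightarrow> 'b::comm_semiring_1"
proof -
  assume a: "finite X" "x \<in> X"
  have "(\<Sum>z\<in>X. A y z * (if z = x then 1 else 0)) = (\<Sum>z\<in>X. if z = x then A y z else 0)"
    by (rule sum.cong) auto
  then show ?thesis using a by (simp add: mm_def)
qed

lemma basis_change:
  fixes M N :: "'a \<Rightarrow> 'a \<Rightarrow> complex" and h :: "'a \<Rightarrow> nat"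
  assumes fin: "finite X" and hb: "\<And>x. x \<in> X \<Longrightarrow> h x \<le> 2"
    and Nh: "\<And>x y. x \<in> X \<Longrightarrow> y \<in> X \<Longrightarrow> N y x \<noteq> 0 \<Longrightarrow> h y < h x"
  obtains C where "cp X C = cp X M"
    and "\<And>w F. w \<in> X \<Longrightarrow>
       (\<And>y. y \<in> X \<Longrightarrow> (\<Sum>x\<in>X. M y x * ((if x = w then 1 else 0) + N x w))
            = (\<Sum>w'\<in>X. ((if y = w' then 1 else 0) + N y w') * F w'))
       \<Longrightarrow> (\<And>w'. w' \<in> X \<Longrightarrow> C w' w = F w')"
proof -
  define Id :: "'a \<Rightarrow> 'a \<Rightarrow> complex" where "Id = (\<lambda>y x. if y = x then 1 else 0)"
  define Q where "Q = (\<lambda>y x. Id y x + N y x)"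
  define N2 where "N2 = mm X N N"
  define N3 where "N3 = mm X N N2"
  define Q' where "Q' = (\<lambda>y x. Id y x - N y x + N2 y x)"
  have N3: "N3 y x = 0" if "y \<in> X" "x \<in> X" for y x
  proof -
    have "N y z * (N z w * N w x) = 0" if "z \<in> X" "w \<in> X" for z w
    proof (rule ccontr)
      assume "N y z * (N z w * N w x) \<noteq> 0"
      then have "N y z \<noteq> 0" "N z w \<noteq> 0" "N w x \<noteq> 0" by auto
      then have "h y < h z" "h z < h w" "h w < h x" using Nh that \<open>y \<in> X\<close> \<open>x \<in> X\<close> by auto
      with hb[OF \<open>x \<in> X\<close>] show False by simp
    qed
    then show ?thesis unfolding N3_def N2_def mm_def
      by (simp add: sum_distrib_left sum.neutral)
  qed
  have QQ': "mm X Q Q' y x = Id y x" if "y \<in> X" "x \<in> X" for y x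
  proof -
    have "mm X Q Q' y x = mm X Id Q' y x + mm X N Q' y x"
      unfolding Q_def by (rule mm_add_left)
    also have "mm X Id Q' y x = Q' y x" unfolding Id_def by (rule mm_id_left[OF fin that(1)])
    also have "mm X N Q' y x = mm X N Id y x - mm X N N y x + mm X N N2 y x"
      unfolding Q'_def by (simp add: mm_add_right mm_diff_right)
    also have "mm X N Id y x = N y x" unfolding Id_def by (rule mm_id_right[OF fin that(2)])
    finally show ?thesis using N3[OF that] by (simp add: Q'_def N2_def N3_def)
  qed
  have Q'Q: "mm X Q' Q y x = Id y x" if "y \<in> X" "x \<in> X" for y x
  proof -
    have "mm X Q' Q y x = mm X Id Q y x - mm X N Q y x + mm X N2 Q y x"
      unfolding Q'_def by (simp add: mm_add_left mm_diff_left)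
    also have "mm X Id Q y x = Q y x" unfolding Id_def by (rule mm_id_left[OF fin that(1)])
    also have "mm X N Q y x = mm X N Id y x + mm X N N y x"
      unfolding Q_def by (rule mm_add_right)
    also have "mm X N2 Q y x = mm X N2 Id y x + mm X N2 N y x"
      unfolding Q_def by (rule mm_add_right)
    also have "mm X N Id y x = N y x" unfolding Id_def by (rule mm_id_right[OF fin that(2)])
    also have "mm X N2 Id y x = N2 y x" unfolding Id_def by (rule mm_id_right[OF fin that(2)])
    also have "mm X N2 N = N3" unfolding N2_def N3_def by (rule mm_assoc[OF fin])
    finally show ?thesis using N3[OF that] by (simp add: Q_def N2_def)
  qed
  define C where "C = mm X (mm X Q' M) Q"
  have "cp X C = cp X M" unfolding C_def
    by (rule cp_sim[OF fin]) (auto simp: QQ' Q'Q Id_def)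
  moreover have "C w' w = F w'"
    if w: "w \<in> X" "w' \<in> X" and F: "\<And>y. y \<in> X \<Longrightarrow> (\<Sum>x\<in>X. M y x * ((if x = w then 1 else 0) + N x w))
            = (\<Sum>w'\<in>X. ((if y = w' then 1 else 0) + N y w') * F w')" for w w' F
  proof -
    have MQ: "mm X M Q y w = (\<Sum>w''\<in>X. Q y w'' * F w'')" if "y \<in> X" for y
      using F[OF that] by (simp add: mm_def Q_def Id_def)
    have "C w' w = mm X Q' (mm X M Q) w' w" unfolding C_def by (simp add: mm_assoc[OF fin])
    also have "\<dots> = (\<Sum>y\<in>X. Q' w' y * (\<Sum>w''\<in>X. Q y w'' * F w''))"
      unfolding mm_def[of X Q' "mm X M Q"] using MQ by simp
    also have "\<dots> = (\<Sum>w''\<in>X. mm X Q' Q w' w'' * F w'')"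
      by (simp add: mm_def sum_distrib_left sum_distrib_right mult.assoc) (rule sum.swap)
    also have "\<dots> = (\<Sum>w''\<in>X. Id w' w'' * F w'')"
      using QQ' Q'Q w by (intro sum.cong) auto
    also have "\<dots> = (\<Sum>w''\<in>X. if w' = w'' then F w'' else 0)" by (rule sum.cong) (auto simp: Id_def)
    also have "\<dots> = F w'" using w fin by simp
    finally show ?thesis .
  qed
  ultimately show ?thesis using that by blast
qed


definition cyc_form :: "complex poly \<Rightarrow> bool" where
  "cyc_form P \<longleftrightarrow> (\<exists>ns d. (\<forall>n\<in>set ns. n \<ge> 1) \<and> P = prod_list (map cyclotomic ns) * monom 1 d)"

lemma cyc_form_1: "cyc_form 1"
  unfolding cyc_form_def by (rule exI[of _ "[]"], rule exI[of _ 0]) (simp add: one_poly_def monom_0)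

lemma cyc_form_monom: "cyc_form (monom 1 d)"
  unfolding cyc_form_def by (rule exI[of _ "[]"], rule exI[of _ d]) simp

lemma cyc_form_mult: "cyc_form P \<Longrightarrow> cyc_form Q \<Longrightarrow> cyc_form (P * Q)"
proof -
  assume "cyc_form P" "cyc_form Q"
  then obtain ns1 d1 ns2 d2 where "\<forall>n\<in>set ns1. n \<ge> 1" "P = prod_list (map cyclotomic ns1) * monom 1 d1"
    "\<forall>n\<in>set ns2. n \<ge> 1" "Q = prod_list (map cyclotomic ns2) * monom 1 d2"
    unfolding cyc_form_def by blast
  then show ?thesis unfolding cyc_form_def
    by (intro exI[of _ "ns1 @ ns2"] exI[of _ "d1 + d2"])
       (auto simp: mult_monom algebra_simps)
qed

lemma cyc_form_prod_list: "\<forall>n\<in>set ns. n \<ge> 1 \<Longrightarrow> cyc_form (prod_list (map cyclotomic ns))"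
  unfolding cyc_form_def by (intro exI[of _ ns] exI[of _ 0]) (simp add: monom_0 one_poly_def[symmetric])

lemma poly_cyclotomic: "poly (cyclotomic n) z = (\<Prod>j | j < n \<and> coprime j n. z - cis (2 * pi * real j / real n))"
  unfolding cyclotomic_def poly_prod by simp

lemma cyclotomic_root_iff:
  "poly (cyclotomic n) z = 0 \<longleftrightarrow> (\<exists>j. j < n \<and> coprime j n \<and> z = cis (2 * pi * real j / real n))"
proof -
  have "finite {j. j < n \<and> coprime j n}" by simp
  then show ?thesis unfolding cyclotomic_def by (subst poly_prod_0) auto
qed

definition rho :: "nat \<Rightarrow> complex" where "rho n = cis (2 * pi / real n)"

lemma rho_root: assumes "n \<ge> 1" shows "poly (cyclotomic n) (rho n) = 0"
proof (cases "n = 1")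
  case True
  have "cis (2 * pi) = cis (2 * pi * real 0 / real 1)" by simp
  then show ?thesis using True unfolding cyclotomic_root_iff rho_def
    by (intro exI[of _ 0]) simp
next
  case False
  then show ?thesis using assms unfolding cyclotomic_root_iff rho_def
    by (intro exI[of _ 1]) simp
qed

lemma cis_eq_int: assumes "cis a = cis b" shows "\<exists>t::int. a - b = 2 * pi * real_of_int t"
proof -
  have "cis (a - b) = 1" using assms cis_divide[of a b] by simp
  then have "cos (a - b) = 1" by (metis cis.sel(1) one_complex.sel(1))
  then obtain t :: int where "a - b = real_of_int t * 2 * pi" using cos_one_2pi_int by blast
  then show ?thesis by (intro exI[of _ t]) simp
qed

lemma root_unique:
  assumes n: "n \<ge> 1" and n': "n' \<ge> 1" and j: "j < n'" "coprime j n'"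
    and eq: "rho n = cis (2 * pi * real j / real n')"
  shows "n = n'"
proof -
  obtain t :: int where t: "2 * pi / real n - 2 * pi * real j / real n' = 2 * pi * real_of_int t"
    using cis_eq_int[OF eq[unfolded rho_def]] by blast
  then have "(2 * pi) * (1 / real n - real j / real n') = (2 * pi) * real_of_int t"
    by (simp add: right_diff_distrib)
  moreover have pi2: "(2::real) * pi \<noteq> 0" by simp
  ultimately have t': "1 / real n - real j / real n' = real_of_int t"
    using mult_left_cancel[OF pi2] by blast
  have b1: "0 < 1 / real n" "1 / real n \<le> 1" using n by (auto simp: field_simps)
  have b2: "0 \<le> real j / real n'" "real j / real n' < 1" using j n' by (auto simp: field_simps)
  have "t = 0 \<or> t = 1"
  proof -
    have "real_of_int t > -1" "real_of_int t \<le> 1" using t' b1 b2 by linarith+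
    then have "t > -1" "t \<le> 1" by linarith+
    then show ?thesis by linarith
  qed
  then show ?thesis
  proof
    assume "t = 0"
    then have "real n' = real j * real n" using t' n n' by (simp add: field_simps)
    then have nj: "n' = j * n" by (metis of_nat_eq_iff of_nat_mult)
    then have "j dvd n'" by simp
    with j(2) have "j = 1" by (metis coprime_common_divisor_nat dvd_refl)
    with nj show ?thesis by simp
  next
    assume "t = 1"
    then have "1 / real n = 1 + real j / real n'" using t' by simp
    with b1 b2 have "1 / real n = 1" "real j / real n' = 0" by linarith+
    then have "n = 1" "j = 0" using n n' by (auto simp: field_simps)
    with j(2) show ?thesis by simp
  qed
qed

lemma cyclotomic_nonzero: "cyclotomic n \<noteq> 0"
  unfolding cyclotomic_def by (subst prod_zero_iff) auto

lemma cyclotomic_poly0: "poly (cyclotomic n) 0 \<noteq> 0"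
  unfolding cyclotomic_root_iff by (auto simp: cis_neq_zero[symmetric])

lemma prod_cyc_poly0: "poly (prod_list (map cyclotomic ns)) 0 \<noteq> 0"
  by (induction ns) (auto simp: cyclotomic_poly0)

lemma cyc_dvd_mem:
  assumes "n \<ge> 1" "\<forall>n\<in>set ns. n \<ge> 1" "poly (prod_list (map cyclotomic ns) * monom 1 d) (rho n) = 0"
  shows "n \<in> set ns"
proof -
  have "rho n \<noteq> 0" by (simp add: rho_def)
  then have "poly (prod_list (map cyclotomic ns)) (rho n) = 0" using assms(3) by (simp add: poly_monom)
  then obtain n' where "n' \<in> set ns" "poly (cyclotomic n') (rho n) = 0"
    by (induction ns) auto
  moreover then obtain j where "j < n'" "coprime j n'" "rho n = cis (2 * pi * real j / real n')"
    unfolding cyclotomic_root_iff by blast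
  ultimately show ?thesis using root_unique[of n n' j] assms(1,2) by auto
qed

lemma cyc_form_div:
  assumes P: "cyc_form P" and R: "cyc_form R" and PQ: "P * Q = R"
  shows "cyc_form Q"
proof -
  obtain ns1 d1 where ns1: "\<forall>n\<in>set ns1. n \<ge> 1" "P = prod_list (map cyclotomic ns1) * monom 1 d1"
    using P unfolding cyc_form_def by blast
  obtain ns2 d2 where ns2: "\<forall>n\<in>set ns2. n \<ge> 1" "R = prod_list (map cyclotomic ns2) * monom 1 d2"
    using R unfolding cyc_form_def by blast
  show ?thesis using ns1 ns2 PQ
  proof (induction ns1 arbitrary: ns2 P R)
    case Nil
    then have eq: "monom 1 d1 * Q = prod_list (map cyclotomic ns2) * monom 1 d2" by simp
    have "d1 \<le> d2"
    proof (rule ccontr)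
      assume "\<not> d1 \<le> d2"
      then have "monom 1 d1 = monom (1::complex) (d1 - d2) * monom 1 d2" by (simp add: mult_monom)
      with eq have "monom 1 d2 * (monom 1 (d1 - d2) * Q) = monom 1 d2 * prod_list (map cyclotomic ns2)"
        by (simp add: algebra_simps)
      then have "monom 1 (d1 - d2) * Q = prod_list (map cyclotomic ns2)"
        by (simp add: monom_eq_0_iff)
      then have "poly (monom 1 (d1 - d2) * Q) 0 = poly (prod_list (map cyclotomic ns2)) 0" by simp
      moreover have "(0::complex) ^ (d1 - d2) = 0" using \<open>\<not> d1 \<le> d2\<close> by simp
      ultimately show False using prod_cyc_poly0[of ns2] by (simp add: poly_monom)
    qed
    then have "monom 1 d2 = monom (1::complex) (d2 - d1) * monom 1 d1" by (simp add: mult_monom)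
    with eq have "monom 1 d1 * Q = monom 1 d1 * (prod_list (map cyclotomic ns2) * monom 1 (d2 - d1))"
      by (simp add: algebra_simps)
    then have "Q = prod_list (map cyclotomic ns2) * monom 1 (d2 - d1)"
      by (simp add: monom_eq_0_iff)
    then show ?case using Nil(3) unfolding cyc_form_def by blast
  next
    case (Cons n ns)
    have n1: "n \<ge> 1" using Cons.prems(1) by simp
    have "R = cyclotomic n * (prod_list (map cyclotomic ns) * monom 1 d1 * Q)"
      using Cons.prems(2,5) by (simp add: mult.assoc)
    then have "poly R (rho n) = 0" using rho_root[OF n1] by (simp only: poly_mult mult_zero_left)
    then have "n \<in> set ns2" using cyc_dvd_mem[OF n1 Cons.prems(3)] Cons.prems(4) by simp
    then have R': "R = cyclotomic n * (prod_list (map cyclotomic (remove1 n ns2)) * monom 1 d2)"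
      using Cons.prems(4) by (simp add: prod_list_map_remove1[of n ns2] mult.assoc)
    have "cyclotomic n * ((prod_list (map cyclotomic ns) * monom 1 d1) * Q)
       = cyclotomic n * (prod_list (map cyclotomic (remove1 n ns2)) * monom 1 d2)"
      using Cons.prems(2,5) R' by (simp add: mult.assoc)
    then have "(prod_list (map cyclotomic ns) * monom 1 d1) * Q = prod_list (map cyclotomic (remove1 n ns2)) * monom 1 d2"
      using cyclotomic_nonzero by simp
    moreover have "\<forall>n\<in>set (remove1 n ns2). n \<ge> 1" using Cons.prems(3) by (meson notin_set_remove1)
    ultimately show ?case
      using Cons.IH[of "prod_list (map cyclotomic ns) * monom 1 d1" "remove1 n ns2"] Cons.prems(1) by simp
  qed
qed


lemma prod_roots_dvd:
  fixes p :: "complex poly"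
  assumes "finite R" "\<And>r. r \<in> R \<Longrightarrow> poly p r = 0"
  shows "(\<Prod>r\<in>R. [:-r,1:]) dvd p"
  using assms
proof (induction R rule: finite_induct)
  case empty then show ?case by simp
next
  case (insert r F)
  then obtain g where g: "p = (\<Prod>s\<in>F. [:-s,1:]) * g" by (auto elim: dvdE)
  have "poly (\<Prod>s\<in>F. [:-s,1:]) r \<noteq> 0"
    using insert(1,2) by (subst poly_prod_0) auto
  moreover have "poly p r = 0" using insert by auto
  ultimately have "poly g r = 0" using g by simp
  then have "[:-r,1:] dvd g" by (simp add: poly_eq_0_iff_dvd)
  then have "[:-r,1:] * (\<Prod>s\<in>F. [:-s,1:]) dvd g * (\<Prod>s\<in>F. [:-s,1:])"
    by (rule mult_dvd_mono) simp
  then have "[:-r,1:] * (\<Prod>s\<in>F. [:-s,1:]) dvd (\<Prod>s\<in>F. [:-s,1:]) * g"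
    by (simp only: mult.commute[of g])
  then show ?case using insert(1,2) g by simp
qed

lemma monic_roots_eq:
  fixes p :: "complex poly"
  assumes R: "finite R" and deg: "degree p = card R" and lc: "coeff p (degree p) = 1"
    and roots: "\<And>r. r \<in> R \<Longrightarrow> poly p r = 0"
  shows "p = (\<Prod>r\<in>R. [:-r,1:])"
proof -
  define D where "D = (\<Prod>r\<in>R. [:-r,1:] :: complex poly)"
  obtain g where g: "p = D * g" using prod_roots_dvd[OF R roots] unfolding D_def by (auto elim: dvdE)
  have p0: "p \<noteq> 0" using lc by auto
  have D0: "D \<noteq> 0" unfolding D_def by (subst prod_zero_iff[OF R]) auto
  have g0: "g \<noteq> 0" using p0 g by auto
  have degD: "degree D = card R" unfolding D_def by (subst degree_prod_sum_eq) auto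
  have "degree p = degree D + degree g" using g degree_mult_eq[OF D0 g0] by simp
  then have dg: "degree g = 0" using deg degD by simp
  have lcD: "lead_coeff D = 1" unfolding D_def by (simp add: lead_coeff_prod)
  have "lead_coeff p = lead_coeff D * lead_coeff g" using g lead_coeff_mult by simp
  then have "lead_coeff g = 1" using lc lcD by simp
  then have "g = 1" using dg by (metis degree_0_id one_pCons)
  then show ?thesis using g D_def by simp
qed

definition shiftm :: "nat \<Rightarrow> complex mat" where
  "shiftm m = mat m m (\<lambda>(i,j). if i = Suc j mod m then 1 else 0)"

lemma shift_eigen:
  assumes m: "m \<ge> 1" and r: "r ^ m = 1"
  shows "poly (char_poly (shiftm m)) r = 0"
proof -
  define v where "v = vec m (\<lambda>i. r ^ (m - i))"
  have "eigenvector (shiftm m) v r"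
    unfolding eigenvector_def
  proof (intro conjI)
    show "v \<in> carrier_vec (dim_row (shiftm m))" by (simp add: v_def shiftm_def)
    show "v \<noteq> 0\<^sub>v (dim_row (shiftm m))"
    proof
      assume "v = 0\<^sub>v (dim_row (shiftm m))"
      then have "v $ 0 = 0" using m by (simp add: shiftm_def)
      then show False using m r by (simp add: v_def)
    qed
    show "shiftm m *\<^sub>v v = r \<cdot>\<^sub>v v"
    proof (rule eq_vecI)
      fix i assume "i < dim_vec (r \<cdot>\<^sub>v v)"
      then have i: "i < m" by (simp add: v_def)
      define k0 where "k0 = (if i = 0 then m - 1 else i - 1)"
      have k0: "k0 < m" using i m by (auto simp: k0_def)
      have iff: "i = Suc k mod m \<longleftrightarrow> k = k0" if "k < m" for k
      proof
        assume "i = Suc k mod m"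
        then show "k = k0" using that i
          by (cases "Suc k = m") (auto simp: k0_def)
      next
        assume "k = k0"
        then show "i = Suc k mod m" using i m by (auto simp: k0_def)
      qed
      have "(shiftm m *\<^sub>v v) $ i = (\<Sum>k<m. (if i = Suc k mod m then 1 else 0) * r ^ (m - k))"
        using i by (auto simp: shiftm_def v_def scalar_prod_def atLeast0LessThan intro!: sum.cong)
      also have "\<dots> = (\<Sum>k<m. if k = k0 then r ^ (m - k) else 0)"
        by (rule sum.cong) (auto simp: iff)
      also have "\<dots> = r ^ (m - k0)" using k0 by simp
      also have "\<dots> = r * r ^ (m - i)"
      proof (cases "i = 0")
        case True
        then have "m - k0 = 1" using m by (simp add: k0_def)
        then show ?thesis using True r by simp
      next
        case False
        then have "m - k0 = Suc (m - i)" using i by (simp add: k0_def)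
        then show ?thesis by simp
      qed
      finally show "(shiftm m *\<^sub>v v) $ i = (r \<cdot>\<^sub>v v) $ i" using i by (simp add: v_def)
    qed (simp add: v_def shiftm_def)
  qed
  then have "eigenvalue (shiftm m) r" unfolding eigenvalue_def by blast
  then show ?thesis using eigenvalue_root_char_poly[of "shiftm m" m] by (simp add: shiftm_def)
qed

lemma char_poly_shift:
  assumes m: "m \<ge> 1"
  shows "char_poly (shiftm m) = (\<Prod>j<m. [:- cis (2 * pi * real j / real m), 1:])"
proof -
  define f where "f = (\<lambda>k. cis (2 * pi * real k / real m))"
  have b: "bij_betw f {..<m} {z. z ^ m = 1}" unfolding f_def using m by (intro bij_betw_roots_unity) simp
  then have inj: "inj_on f {..<m}" by (simp add: bij_betw_def)
  have car: "shiftm m \<in> carrier_mat m m" by (simp add: shiftm_def)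
  have "char_poly (shiftm m) = (\<Prod>r\<in>f ` {..<m}. [:-r,1:])"
  proof (rule monic_roots_eq)
    show "finite (f ` {..<m})" by simp
    show "degree (char_poly (shiftm m)) = card (f ` {..<m})"
      using degree_monic_char_poly[OF car] card_image[OF inj] by simp
    show "coeff (char_poly (shiftm m)) (degree (char_poly (shiftm m))) = 1"
      using degree_monic_char_poly[OF car] by simp
    fix r assume "r \<in> f ` {..<m}"
    then have "r ^ m = 1" using b by (auto simp: bij_betw_def)
    then show "poly (char_poly (shiftm m)) r = 0" by (rule shift_eigen[OF m])
  qed
  also have "\<dots> = (\<Prod>j<m. [:- f j, 1:])" by (rule prod.reindex[OF inj, unfolded comp_def])
  finally show ?thesis by (simp add: f_def)
qed

lemma prod_roots_cyclotomic:
  assumes m: "m \<ge> 1"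
  shows "(\<Prod>j<m. [:- cis (2 * pi * real j / real m), 1:]) = (\<Prod>n\<in>{n. n dvd m}. cyclotomic n)"
proof -
  define S where "S = (\<lambda>n::nat. {j. j < n \<and> coprime j n})"
  define h where "h = (\<lambda>(n, j). j * (m div n))"
  have finD: "finite {n. n dvd m}" using m by simp
  have "(\<Prod>n\<in>{n. n dvd m}. cyclotomic n) = (\<Prod>n\<in>{n. n dvd m}. \<Prod>j\<in>S n. [:- cis (2 * pi * real j / real n), 1:])"
    by (simp add: cyclotomic_def S_def)
  also have "\<dots> = (\<Prod>(n,j)\<in>Sigma {n. n dvd m} S. [:- cis (2 * pi * real j / real n), 1:])"
    by (rule prod.Sigma[OF finD]) (auto simp: S_def)
  also have "\<dots> = (\<Prod>x\<in>Sigma {n. n dvd m} S. [:- cis (2 * pi * real (h x) / real m), 1:])"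
  proof (rule prod.cong[OF refl])
    fix x assume x: "x \<in> Sigma {n. n dvd m} S"
    obtain n j where nj: "x = (n, j)" by (cases x)
    with x have n: "n dvd m" by auto
    then have n0: "n > 0" using m by (auto intro: Nat.gr0I)
    have mm: "real m = real n * real (m div n)" using n by (metis dvd_mult_div_cancel of_nat_mult)
    have md0: "real (m div n) \<noteq> 0" using m n by (auto simp: dvd_div_eq_0_iff)
    have "2 * pi * real (j * (m div n)) / real m = 2 * pi * real j / real n"
      using n0 md0 by (simp add: mm field_simps)
    then show "(case x of (n, j) \<Rightarrow> [:- cis (2 * pi * real j / real n), 1:]) = [:- cis (2 * pi * real (h x) / real m), 1:]"
      by (simp add: nj h_def)
  qed
  also have "\<dots> = (\<Prod>j<m. [:- cis (2 * pi * real j / real m), 1:])"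
  proof (rule prod.reindex_bij_betw[of h, where g = "\<lambda>k. [:- cis (2 * pi * real k / real m), 1:]"])
    show "bij_betw h (Sigma {n. n dvd m} S) {..<m}"
    proof (rule bij_betwI')
      fix x y assume x: "x \<in> Sigma {n. n dvd m} S" and y: "y \<in> Sigma {n. n dvd m} S"
      obtain n1 j1 where x': "x = (n1, j1)" by (cases x)
      obtain n2 j2 where y': "y = (n2, j2)" by (cases y)
      have d1: "n1 dvd m" "j1 < n1" "coprime j1 n1" using x x' by (auto simp: S_def)
      have d2: "n2 dvd m" "j2 < n2" "coprime j2 n2" using y y' by (auto simp: S_def)
      show "h x = h y \<longleftrightarrow> x = y"
      proof
        assume "h x = h y"
        then have e: "j1 * (m div n1) = j2 * (m div n2)" by (simp add: h_def x' y')
        have "j1 * n2 * (m div n1 * n1) = j2 * n1 * (m div n2 * n2)"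
          using e by (metis mult.assoc mult.commute)
        then have "j1 * n2 * m = j2 * n1 * m" using d1(1) d2(1) by simp
        then have e2: "j1 * n2 = j2 * n1" using m by simp
        have "n1 dvd j1 * n2" using e2 by simp
        then have "n1 dvd n2" using d1(3) by (simp add: coprime_commute coprime_dvd_mult_right_iff)
        moreover have "n2 dvd j2 * n1" using e2 by (metis dvd_triv_right)
        then have "n2 dvd n1" using d2(3) by (simp add: coprime_commute coprime_dvd_mult_right_iff)
        ultimately have "n1 = n2" by (simp add: dvd_antisym)
        moreover then have "j1 = j2" using e2 d1(2) by simp
        ultimately show "x = y" using x' y' by simp
      qed simp
    next
      fix x assume x: "x \<in> Sigma {n. n dvd m} S"
      obtain n j where x': "x = (n, j)" by (cases x)
      have d: "n dvd m" "j < n" "coprime j n" using x x' by (auto simp: S_def)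
      have "j * (m div n) < n * (m div n)" using d(2) m d(1)
        by (metis dvd_div_eq_0_iff mult_less_mono1 not_gr0 not_one_le_zero)
      then show "h x \<in> {..<m}" using d(1) by (simp add: h_def x')
    next
      fix k assume k: "k \<in> {..<m}"
      define g where "g = gcd k m"
      have g0: "g > 0" using m by (simp add: g_def)
      have gm: "g dvd m" "g dvd k" by (auto simp: g_def)
      define n where "n = m div g"
      define j where "j = k div g"
      have nd: "n dvd m" using gm unfolding n_def by (metis dvd_mult_div_cancel dvd_triv_right)
      have cop: "coprime j n" unfolding j_def n_def g_def using m by (intro div_gcd_coprime) simp
      have jn: "j < n"
      proof -
        obtain a where a: "k = g * a" using gm(2) by (auto elim: dvdE)
        obtain b where b: "m = g * b" using gm(1) by (auto elim: dvdE)
        have "g * a < g * b" using k a b by simp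
        then have "a < b" by simp
        then show ?thesis unfolding j_def n_def using a b g0 by simp
      qed
      have mdn: "m div n = g"
      proof -
        obtain b where b: "m = g * b" using gm(1) by (auto elim: dvdE)
        then have "b > 0" using m by (auto intro: Nat.gr0I)
        then show ?thesis unfolding n_def using b g0 by simp
      qed
      have "h (n, j) = k" using gm by (simp add: h_def mdn j_def)
      moreover have "(n, j) \<in> Sigma {n. n dvd m} S" using nd cop jn by (simp add: S_def)
      ultimately show "\<exists>x\<in>Sigma {n. n dvd m} S. k = h x" by metis
    qed
  qed
  finally show ?thesis by simp
qed

lemma cyc_form_shift:
  assumes "m \<ge> 1" shows "cyc_form (char_poly (shiftm m))"
proof -
  have fin: "finite {n. n dvd m}" using assms by simp
  define ns where "ns = sorted_list_of_set {n. n dvd m}"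
  have "(\<Prod>n\<in>{n. n dvd m}. cyclotomic n) = prod_list (map cyclotomic ns)"
    unfolding ns_def using fin by (metis prod.distinct_set_conv_list distinct_sorted_list_of_set set_sorted_list_of_set)
  moreover have "\<forall>n\<in>set ns. n \<ge> 1" unfolding ns_def using fin assms
    by (auto intro: Nat.gr0I simp: Suc_le_eq)
  ultimately show ?thesis
    using char_poly_shift[OF assms] prod_roots_cyclotomic[OF assms] cyc_form_prod_list by simp
qed


lemma cp_empty: "cp {} M = 1"
  unfolding cp_def char_poly_def matX_def
  by (rule det_dim_zero) (simp add: char_poly_matrix_def)

lemma cp_single: "cp {x} M = [:- M x x, 1:]"
proof -
  have b: "bij_betw (\<lambda>_. x) {..<1::nat} {x}" by (auto simp: bij_betw_def inj_on_def)
  have "cp {x} M = char_poly (mat 1 1 (\<lambda>(i,j). M x x))"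
    using cp_bij[OF _ b, of M] by simp
  also have "\<dots> = [:- M x x, 1:]"
    unfolding char_poly_def
    by (subst det_single) (auto simp: char_poly_matrix_def)
  finally show ?thesis .
qed

lemma funpow_in: "x \<in> X \<Longrightarrow> (\<And>y. y \<in> X \<Longrightarrow> f y \<in> X) \<Longrightarrow> (f ^^ i) x \<in> X"
  by (induction i) auto

lemma funpow_inj: "inj_on f X \<Longrightarrow> (\<And>y. y \<in> X \<Longrightarrow> f y \<in> X) \<Longrightarrow> x \<in> X \<Longrightarrow> y \<in> X
  \<Longrightarrow> (f ^^ i) x = (f ^^ i) y \<Longrightarrow> x = y"
proof (induction i)
  case 0 then show ?case by simp
next
  case (Suc i)
  have "f ((f ^^ i) x) = f ((f ^^ i) y)" using Suc.prems(5) by simp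
  then have "(f ^^ i) x = (f ^^ i) y" using Suc.prems(1,2,3,4) funpow_in[of _ X f i]
    by (meson inj_onD)
  then show ?case using Suc by blast
qed

lemma partial_map_cyc:
  fixes M :: "'a \<Rightarrow> 'a \<Rightarrow> complex" and \<phi> :: "'a \<Rightarrow> 'a option"
  assumes "finite X" "\<And>x y. x \<in> X \<Longrightarrow> y \<in> X \<Longrightarrow> M y x = (if \<phi> x = Some y then 1 else 0)"
  shows "cyc_form (cp X M)"
  using assms
proof (induction "card X" arbitrary: X rule: less_induct)
  case less
  note fin = less.prems(1) and Mdef = less.prems(2)
  show ?case
  proof (cases "X = {}")
    case True then show ?thesis by (simp add: cp_empty cyc_form_1)
  next
    case ne: False
    show ?thesis
    proof (cases "\<exists>x0\<in>X. \<forall>x\<in>X. \<phi> x \<noteq> Some x0")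
      case True
      then obtain x0 where x0: "x0 \<in> X" "\<forall>x\<in>X. \<phi> x \<noteq> Some x0" by blast
      have XX: "X = (X - {x0}) \<union> {x0}" using x0 by auto
      have "cp X M = cp (X - {x0}) M * cp {x0} M"
        by (subst XX, rule cp_block) (use fin Mdef x0 in auto)
      moreover have "cp {x0} M = monom 1 1" using Mdef x0 by (simp add: cp_single monom_Suc monom_0)
      moreover have "cyc_form (cp (X - {x0}) M)"
      proof -
        have "card X > 0" using fin x0 by (auto simp: card_gt_0_iff)
        then show ?thesis using less.hyps[of "X - {x0}"] fin Mdef x0 by simp
      qed
      ultimately show ?thesis by (simp add: cyc_form_mult cyc_form_monom)
    next
      case False
      then have surj: "\<forall>x0\<in>X. \<exists>x\<in>X. \<phi> x = Some x0" by blast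
      define f where "f x = the (\<phi> x)" for x
      define X' where "X' = {x\<in>X. \<exists>y\<in>X. \<phi> x = Some y}"
      have fX': "f ` X' = X"
      proof
        show "f ` X' \<subseteq> X" by (auto simp: X'_def f_def)
        show "X \<subseteq> f ` X'"
        proof
          fix x0 assume "x0 \<in> X"
          then obtain x where "x \<in> X" "\<phi> x = Some x0" using surj by blast
          then show "x0 \<in> f ` X'" using \<open>x0 \<in> X\<close> by (auto simp: X'_def f_def image_iff intro!: exI[of _ x])
        qed
      qed
      have X'X: "X' \<subseteq> X" by (auto simp: X'_def)
      have finX': "finite X'" using fin X'X by (rule finite_subset[rotated])
      have "card X \<le> card X'" using card_image_le[OF finX', of f] fX' by simp
      then have "card X' = card X" using card_mono[OF fin X'X] by linarith
      then have X'eq: "X' = X" by (rule card_subset_eq[OF fin X'X])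
      then have fX: "f ` X = X" using fX' by simp
      have finj: "inj_on f X" by (rule eq_card_imp_inj_on[OF fin]) (simp add: fX)
      have phif: "\<phi> x = Some (f x)" if "x \<in> X" for x
      proof -
        have "x \<in> X'" using that X'eq by simp
        then obtain y where "\<phi> x = Some y" by (auto simp: X'_def)
        then show ?thesis by (simp add: f_def)
      qed
      have fin_X: "f x \<in> X" if "x \<in> X" for x using fX that by blast
      obtain x0 where x0: "x0 \<in> X" using ne by blast
      define g where "g i = (f ^^ i) x0" for i
      have gX: "g i \<in> X" for i unfolding g_def by (rule funpow_in[of x0 X f, OF x0 fin_X])
      have "\<not> inj_on g {..card X}"
      proof
        assume "inj_on g {..card X}"
        then have "card (g ` {..card X}) = card {..card X}" by (rule card_image)
        moreover have "card (g ` {..card X}) \<le> card X" using gX fin by (intro card_mono) auto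
        ultimately show False by simp
      qed
      then obtain i j where ij: "i \<le> card X" "j \<le> card X" "i \<noteq> j" "g i = g j"
        unfolding inj_on_def by auto
      have "\<exists>d>0. (f ^^ d) x0 = x0"
      proof -
        have gen: "\<exists>d>0. (f ^^ d) x0 = x0" if "a < b" "g a = g b" for a b
        proof -
          have "(f ^^ a) ((f ^^ (b - a)) x0) = (f ^^ a) x0"
            using that by (simp add: g_def funpow_add[symmetric, THEN fun_cong, simplified comp_def] )
          then have "(f ^^ (b - a)) x0 = x0"
            using funpow_inj[of f X, OF finj fin_X funpow_in[of x0 X f, OF x0 fin_X] x0] by blast
          then show ?thesis using that by (intro exI[of _ "b - a"]) simp
        qed
        show ?thesis
        proof (cases "i < j")
          case True then show ?thesis using gen ij by blast
        next
          case False then have "j < i" using ij by simp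
          then show ?thesis using gen ij by metis
        qed
      qed
      define m where "m = (LEAST d. d > 0 \<and> (f ^^ d) x0 = x0)"
      have m: "m > 0" "(f ^^ m) x0 = x0"
        using LeastI_ex[OF \<open>\<exists>d>0. (f ^^ d) x0 = x0\<close>] unfolding m_def by auto
      have mmin: "\<not> ((f ^^ d) x0 = x0)" if "0 < d" "d < m" for d
        using not_less_Least[of d "\<lambda>d. d > 0 \<and> (f ^^ d) x0 = x0"] that unfolding m_def by auto
      define Orb where "Orb = g ` {..<m}"
      have ginj: "inj_on g {..<m}"
      proof (rule inj_onI, rule ccontr)
        fix a b assume ab: "a \<in> {..<m}" "b \<in> {..<m}" "g a = g b" "a \<noteq> b"
        have gen: False if "a' < b'" "b' < m" "g a' = g b'" for a' b'
        proof -
          have "(f ^^ a') ((f ^^ (b' - a')) x0) = (f ^^ a') x0"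
            using that by (simp add: g_def funpow_add[symmetric, THEN fun_cong, simplified comp_def])
          then have "(f ^^ (b' - a')) x0 = x0"
            using funpow_inj[of f X, OF finj fin_X funpow_in[of x0 X f, OF x0 fin_X] x0] by blast
          then show False using mmin[of "b' - a'"] that by simp
        qed
        show False
        proof (cases "a < b")
          case True then show False using gen ab by auto
        next
          case False then have "b < a" using ab by simp
          then show False using gen[of b a] ab by auto
        qed
      qed
      have bO: "bij_betw g {..<m} Orb" unfolding Orb_def using ginj by (simp add: bij_betw_def)
      have OX: "Orb \<subseteq> X" unfolding Orb_def using gX by auto
      have gsuc: "f (g j) = g (Suc j mod m)" if "j < m" for j
      proof (cases "Suc j = m")
        case True
        then have "f (g j) = (f ^^ m) x0" by (simp add: g_def flip: True)
        then show ?thesis using m True by (simp add: g_def)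
      next
        case False then show ?thesis using that by (simp add: g_def)
      qed
      have fO: "f x \<in> Orb" if "x \<in> Orb" for x
        using that gsuc m(1) unfolding Orb_def by auto
      have XO: "X = Orb \<union> (X - Orb)" using OX by auto
      have finO: "finite Orb" using OX fin finite_subset by blast
      have "cp X M = cp Orb M * cp (X - Orb) M"
      proof (subst XO, rule cp_block)
        show "M y x = 0" if "x \<in> Orb" "y \<in> X - Orb" for x y
        proof -
          have "x \<in> X" using that OX by auto
          then have "\<phi> x = Some (f x)" by (rule phif)
          moreover have "f x \<noteq> y" using fO[OF that(1)] that(2) by auto
          ultimately show ?thesis using Mdef[of x y] that \<open>x \<in> X\<close> by simp
        qed
      qed (use finO fin in auto)
      moreover have "cyc_form (cp (X - Orb) M)"
      proof (rule less.hyps)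
        have "x0 \<in> Orb" unfolding Orb_def g_def using m(1) by (auto intro: image_eqI[of _ _ 0])
        then have "X - Orb \<subset> X" using x0 by blast
        then show "card (X - Orb) < card X" using fin by (rule psubset_card_mono[rotated])
      qed (use fin Mdef in auto)
      moreover have "cp Orb M = char_poly (shiftm m)"
      proof -
        have "mat m m (\<lambda>(i,j). M (g i) (g j)) = shiftm m"
        proof (rule eq_matI)
          fix i j assume ij: "i < dim_row (shiftm m)" "j < dim_col (shiftm m)"
          then have ij': "i < m" "j < m" by (auto simp: shiftm_def)
          have "M (g i) (g j) = (if f (g j) = g i then 1 else 0)"
            using Mdef[OF gX gX] phif[OF gX] by simp
          also have "\<dots> = (if g (Suc j mod m) = g i then 1 else 0)" using gsuc[OF ij'(2)] by simp
          also have "\<dots> = (if i = Suc j mod m then 1 else 0)"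
            using ginj ij' m(1) by (auto simp: inj_on_def)
          finally show "mat m m (\<lambda>(i,j). M (g i) (g j)) $$ (i,j) = shiftm m $$ (i,j)"
            using ij' by (simp add: shiftm_def)
        qed (auto simp: shiftm_def)
        then show ?thesis using cp_bij[OF finO bO, of M] by simp
      qed
      ultimately show ?thesis using cyc_form_shift[of m] m(1) by (simp add: cyc_form_mult)
    qed
  qed
qed


definition can :: "nat \<Rightarrow> nat \<Rightarrow> nat \<Rightarrow> nat" where
  "can K q i = (if i \<le> q then i else q + 1 + (i - q - 1) mod K)"

definition srt :: "nat \<times> nat \<Rightarrow> nat \<times> nat" where
  "srt v = (min (fst v) (snd v), max (fst v) (snd v))"

lemma srt_sym: "srt (a, b) = srt (b, a)" by (simp add: srt_def min.commute max.commute)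

lemma can_ge1: "1 \<le> i \<Longrightarrow> 1 \<le> can K q i" by (simp add: can_def)
lemma can_le: "K \<ge> 1 \<Longrightarrow> can K q i \<le> q + K"
proof -
  assume "K \<ge> 1"
  then have "(i - q - 1) mod K < K" by simp
  then show ?thesis by (simp add: can_def)
qed
lemma can_id: "1 \<le> i \<Longrightarrow> i \<le> q + K \<Longrightarrow> can K q i = i"
  by (simp add: can_def)
lemma can_can_mult: "p \<ge> 1 \<Longrightarrow> can p q (can (k * p) q i) = can p q i"
proof (cases "i \<le> q")
  case True then show ?thesis by (simp add: can_def)
next
  case False
  have "(i - q - 1) mod (k * p) mod p = (i - q - 1) mod p" by (rule mod_mod_cancel) simp
  then show ?thesis using False by (simp add: can_def)
qed
lemma can_idem: "K \<ge> 1 \<Longrightarrow> can K q (can K q i) = can K q i"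
proof (cases "i \<le> q")
  case True then show ?thesis by (simp add: can_def)
next
  case False
  then show ?thesis by (simp add: can_def)
qed
lemma can_suc: "K \<ge> 1 \<Longrightarrow> can K q (can K q i + 1) = can K q (i + 1)"
proof -
  assume K: "K \<ge> 1"
  show ?thesis
  proof (cases "i \<le> q")
    case True then show ?thesis by (simp add: can_def)
  next
    case False
    then have "can K q i = q + 1 + (i - q - 1) mod K" by (simp add: can_def)
    moreover have "(Suc ((i - q - 1) mod K)) mod K = (i - q) mod K"
    proof -
      have "i - q = Suc (i - q - 1)" using False by simp
      then show ?thesis by (simp only: mod_Suc_eq)
    qed
    ultimately show ?thesis using False by (simp add: can_def)
  qed
qed

locale wsys =
  fixes p q k :: nat
  assumes p1: "p \<ge> 1" and k1: "k \<ge> 1"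
begin

abbreviation "n1 \<equiv> q + p"
abbreviation "nk \<equiv> q + k * p"

lemma kp1: "k * p \<ge> 1" using p1 k1 by simp
lemma n1_le_nk: "n1 \<le> nk" using k1 by simp
lemma p_le_kp: "p \<le> k * p" using k1 by simp

definition pi :: "nat \<Rightarrow> nat" where "pi c = can p q c"
definition sg :: "nat \<Rightarrow> nat" where "sg c = can (k * p) q (c + 1)"

abbreviation nc :: "nat \<Rightarrow> bool" where "nc c \<equiv> n1 < c"

lemma pi_le: "pi c \<le> n1" using can_le[OF p1] by (simp add: pi_def)
lemma pi_not_nc: "\<not> nc (pi c)" using pi_le[of c] by linarith
lemma pi_ge1: "1 \<le> c \<Longrightarrow> 1 \<le> pi c" unfolding pi_def by (rule can_ge1)
lemma pi_id: "1 \<le> c \<Longrightarrow> \<not> nc c \<Longrightarrow> pi c = c" by (simp add: pi_def can_id)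
lemma pi_pi: "pi (pi c) = pi c" by (simp add: pi_def can_idem[OF p1])
lemma sg_ge1: "1 \<le> sg c" unfolding sg_def by (rule can_ge1) simp
lemma sg_le: "sg c \<le> nk" using can_le[OF kp1] by (simp add: sg_def)
lemma pi_sg: "pi (sg c) = can p q (c + 1)" by (simp add: pi_def sg_def can_can_mult[OF p1])
lemma pi_sg_pi: "pi (sg (pi c)) = pi (sg c)"
  unfolding pi_sg using can_suc[OF p1, of q c] by (simp add: pi_def)

definition Pset :: "nat \<Rightarrow> (nat \<times> nat) set" where
  "Pset K = {(a,b). 1 \<le> a \<and> a \<le> b \<and> b \<le> q + K}"

lemma finite_Pset: "finite (Pset K)"
  by (rule finite_subset[of _ "{1..q+K} \<times> {1..q+K}"]) (auto simp: Pset_def)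

lemma srt_in_Pset: "1 \<le> a \<Longrightarrow> 1 \<le> b \<Longrightarrow> a \<le> q + K \<Longrightarrow> b \<le> q + K \<Longrightarrow> srt (a,b) \<in> Pset K"
  by (auto simp: srt_def Pset_def)

definition targ :: "nat \<Rightarrow> (nat \<Rightarrow> nat \<Rightarrow> label) \<Rightarrow> nat \<times> nat \<Rightarrow> (nat \<times> nat) list" where
  "targ K l v = (case l (pi (fst v)) (pi (snd v)) of
      E \<Rightarrow> []
    | N \<Rightarrow> [srt (can K q (fst v + 1), can K q (snd v + 1))]
    | S \<Rightarrow> [(1, can K q (fst v + 1)), (1, can K q (snd v + 1))])"

definition adjm :: "nat \<Rightarrow> (nat \<Rightarrow> nat \<Rightarrow> label) \<Rightarrow> nat \<times> nat \<Rightarrow> nat \<times> nat \<Rightarrow> complex" where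
  "adjm K l y x = of_nat (count_list (targ K l x) y)"

end


context wsys begin

abbreviation "Pk \<equiv> Pset (k * p)"

definition Ev :: "nat \<Rightarrow> nat \<Rightarrow> nat \<times> nat \<Rightarrow> complex" where
  "Ev s t = (\<lambda>y. if y = srt (s,t) then 1 else 0)"
lemma Ev_sym: "Ev s t = Ev t s" by (simp add: Ev_def srt_sym)

definition Zv :: "nat \<Rightarrow> nat \<Rightarrow> nat \<times> nat \<Rightarrow> complex" where
  "Zv s t = (\<lambda>y. Ev s t y - Ev s (pi t) y - Ev (pi s) t y + Ev (pi s) (pi t) y)"
definition Yv :: "nat \<Rightarrow> nat \<Rightarrow> nat \<times> nat \<Rightarrow> complex" where
  "Yv a t = (\<lambda>y. Ev a t y - Ev a (pi t) y)"

lemma Ev_decomp: "Ev x y v = Zv x y v + Yv (pi x) y v + Yv (pi y) x v + Ev (pi x) (pi y) v"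
proof -
  have "Ev (pi y) x = Ev x (pi y)" "Ev (pi y) (pi x) = Ev (pi x) (pi y)" by (rule Ev_sym)+
  then show ?thesis by (simp add: Zv_def Yv_def pi_pi)
qed

lemma Zv_sym: "Zv s t = Zv t s"
  unfolding Zv_def using Ev_sym by (auto intro!: ext)

lemma Zv_can: "1 \<le> s \<Longrightarrow> \<not> nc s \<Longrightarrow> Zv s t v = 0"
  by (simp add: Zv_def pi_id)
lemma Yv_can: "1 \<le> t \<Longrightarrow> \<not> nc t \<Longrightarrow> Yv a t v = 0"
  by (simp add: Yv_def pi_id)

definition bvec :: "nat \<times> nat \<Rightarrow> nat \<times> nat \<Rightarrow> complex" where
  "bvec w = (if nc (snd w) then (if nc (fst w) then Zv (fst w) (snd w) else Yv (fst w) (snd w))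
             else Ev (fst w) (snd w))"

definition hh :: "nat \<times> nat \<Rightarrow> nat" where
  "hh w = (if nc (fst w) then 1 else 0) + (if nc (snd w) then 1 else 0)"

lemma hh_srt: "hh (srt (x, y)) = (if nc x then 1 else 0) + (if nc y then 1 else 0)"
  by (auto simp: hh_def srt_def min_def max_def)

lemma bvec_diag:
  assumes w: "w \<in> Pk" and h: "hh w \<le> hh y"
  shows "bvec w y = (if y = w then 1 else 0)"
proof -
  obtain a b where ab: "w = (a, b)" by (cases w)
  have ab': "1 \<le> a" "a \<le> b" "b \<le> nk" using w ab by (auto simp: Pset_def)
  have srtab: "srt (a, b) = (a, b)" using ab' by (simp add: srt_def)
  have ne: "y \<noteq> srt (s, t)" if "hh (srt (s,t)) < hh w" for s t
    using that h by auto
  show ?thesis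
  proof (cases "nc b")
    case nb: True
    show ?thesis
    proof (cases "nc a")
      case True
      have hw: "hh w = 2" using True nb by (simp add: ab hh_def)
      have "hh (srt (a, pi b)) < hh w" "hh (srt (pi a, b)) < hh w" "hh (srt (pi a, pi b)) < hh w"
        unfolding hh_srt hw using pi_not_nc[of a] pi_not_nc[of b] by auto
      then have "y \<noteq> srt (a, pi b)" "y \<noteq> srt (pi a, b)" "y \<noteq> srt (pi a, pi b)"
        by (auto intro!: ne)
      then show ?thesis using True nb by (simp add: bvec_def ab Zv_def Ev_def srtab)
    next
      case False
      have hw: "hh w = 1" using False nb by (simp add: ab hh_def)
      have "hh (srt (a, pi b)) < hh w"
        unfolding hh_srt hw using pi_not_nc[of b] False by auto
      then have "y \<noteq> srt (a, pi b)" by (auto intro!: ne)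
      then show ?thesis using False nb by (simp add: bvec_def ab Yv_def Ev_def srtab)
    qed
  next
    case False
    then show ?thesis by (simp add: bvec_def ab Ev_def srtab)
  qed
qed

lemma bvec_tri:
  assumes w: "w \<in> Pk" and y: "y \<in> Pk" and ne: "bvec w y - (if y = w then 1 else 0) \<noteq> 0"
  shows "hh y < hh w"
proof (rule ccontr)
  assume "\<not> hh y < hh w"
  then have "hh w \<le> hh y" by simp
  then show False using bvec_diag[OF w, of y] ne by simp
qed

lemma hh_le2: "hh w \<le> 2" by (simp add: hh_def)

definition Mv :: "(nat \<Rightarrow> nat \<Rightarrow> label) \<Rightarrow> (nat \<times> nat \<Rightarrow> complex) \<Rightarrow> nat \<times> nat \<Rightarrow> complex" where
  "Mv l v y = (\<Sum>x\<in>Pk. adjm (k * p) l y x * v x)"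

lemma Mv_diff: "Mv l (\<lambda>x. f x - g x) y = Mv l f y - Mv l g y"
  by (simp add: Mv_def right_diff_distrib sum_subtractf)
lemma Mv_add: "Mv l (\<lambda>x. f x + g x) y = Mv l f y + Mv l g y"
  by (simp add: Mv_def distrib_left sum.distrib)

definition TE :: "(nat \<Rightarrow> nat \<Rightarrow> label) \<Rightarrow> nat \<Rightarrow> nat \<Rightarrow> nat \<times> nat \<Rightarrow> complex" where
  "TE l s t = (case l (pi s) (pi t) of
      N \<Rightarrow> Ev (sg s) (sg t)
    | S \<Rightarrow> (\<lambda>y. Ev 1 (sg s) y + Ev 1 (sg t) y)
    | E \<Rightarrow> (\<lambda>y. 0))"

lemma TE_sym: assumes sym: "\<And>a b. l a b = l b a" shows "TE l s t = TE l t s"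
  unfolding TE_def using sym[of "pi s" "pi t"] Ev_sym[of "sg s" "sg t"]
  by (cases "l (pi t) (pi s)") (auto intro!: ext)

lemma Ev1: "1 \<le> x \<Longrightarrow> Ev (Suc 0) x y = (if y = (Suc 0, x) then 1 else 0)"
  by (auto simp: Ev_def srt_def)

lemma adjm_TE:
  assumes st: "s \<le> t"
  shows "adjm (k * p) l y (s, t) = TE l s t y"
proof -
  have tg: "targ (k * p) l (s, t) = (case l (pi s) (pi t) of E \<Rightarrow> [] | N \<Rightarrow> [srt (sg s, sg t)]
      | S \<Rightarrow> [(1, sg s), (1, sg t)])"
    by (simp add: targ_def sg_def split: label.split)
  show ?thesis
  proof (cases "l (pi s) (pi t)")
    case N then show ?thesis by (auto simp: adjm_def tg TE_def Ev_def)
  next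
    case S then show ?thesis by (auto simp: adjm_def tg TE_def Ev1[OF sg_ge1])
  next
    case E then show ?thesis by (simp add: adjm_def tg TE_def)
  qed
qed

lemma Mv_Ev:
  assumes sym: "\<And>a b. l a b = l b a" and s: "1 \<le> s" "s \<le> nk" and t: "1 \<le> t" "t \<le> nk"
  shows "Mv l (Ev s t) y = TE l s t y"
proof -
  have inP: "srt (s, t) \<in> Pk" using s t by (intro srt_in_Pset) auto
  have "Mv l (Ev s t) y = (\<Sum>x\<in>Pk. if x = srt (s, t) then adjm (k * p) l y x else 0)"
    unfolding Mv_def Ev_def by (rule sum.cong) auto
  also have "\<dots> = adjm (k * p) l y (srt (s, t))" using inP finite_Pset by simp
  also have "\<dots> = TE l s t y"
  proof (cases "s \<le> t")
    case True then show ?thesis by (simp add: srt_def adjm_TE)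
  next
    case False
    then have "srt (s, t) = (t, s)" by (simp add: srt_def)
    then show ?thesis using False adjm_TE[where s=t and t=s and l=l and y=y] TE_sym[where l=l and s=s and t=t, OF sym] by simp
  qed
  finally show ?thesis .
qed

end


context wsys begin

definition zzF :: "nat \<Rightarrow> nat \<Rightarrow> nat \<times> nat \<Rightarrow> complex" where
  "zzF x y = (\<lambda>w'. if nc x \<and> nc y \<and> w' = srt (x,y) then 1 else 0)"
definition yzF :: "nat \<Rightarrow> nat \<Rightarrow> nat \<times> nat \<Rightarrow> complex" where
  "yzF a x = (\<lambda>w'. if nc x \<and> w' = (a, x) then 1 else 0)"
definition yyF :: "nat \<Rightarrow> nat \<Rightarrow> nat \<times> nat \<Rightarrow> complex" where
  "yyF a b = (\<lambda>w'. if w' = srt (a,b) then 1 else 0)"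

definition Rs :: "(nat \<times> nat \<Rightarrow> complex) \<Rightarrow> nat \<times> nat \<Rightarrow> complex" where
  "Rs F v = (\<Sum>w'\<in>Pk. bvec w' v * F w')"

lemma Rs_add: "Rs (\<lambda>w. F w + G w) v = Rs F v + Rs G v"
  by (simp add: Rs_def distrib_left sum.distrib)
lemma Rs_diff: "Rs (\<lambda>w. F w - G w) v = Rs F v - Rs G v"
  by (simp add: Rs_def right_diff_distrib sum_subtractf)
lemma Rs_zero: "Rs (\<lambda>w. 0) v = 0"
  by (simp add: Rs_def)

lemma Rs_ind: "t \<in> Pk \<Longrightarrow> Rs (\<lambda>w'. if P \<and> w' = t then 1 else 0) v = (if P then bvec t v else 0)"
proof -
  assume t: "t \<in> Pk"
  have "Rs (\<lambda>w'. if P \<and> w' = t then 1 else 0) v = (\<Sum>w'\<in>Pk. if w' = t then (if P then bvec w' v else 0) else 0)"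
    unfolding Rs_def by (rule sum.cong) auto
  also have "\<dots> = (if P then bvec t v else 0)" using t finite_Pset by simp
  finally show ?thesis .
qed

lemma zz_sum:
  assumes "1 \<le> x" "x \<le> nk" "1 \<le> y" "y \<le> nk"
  shows "Rs (zzF x y) v = Zv x y v"
proof -
  have t: "srt (x, y) \<in> Pk" using assms by (intro srt_in_Pset) auto
  have "Rs (zzF x y) v = (if nc x \<and> nc y then bvec (srt (x,y)) v else 0)"
    using Rs_ind[OF t, of "nc x \<and> nc y" v] unfolding zzF_def by (simp only: conj_assoc)
  also have "\<dots> = Zv x y v"
  proof (cases "nc x \<and> nc y")
    case True
    then have "bvec (srt (x,y)) = Zv (min x y) (max x y)"
      by (simp add: bvec_def srt_def min_def max_def)
    also have "\<dots> = Zv x y" by (cases "x \<le> y") (auto simp: min_def max_def Zv_sym)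
    finally show ?thesis using True by simp
  next
    case False
    then show ?thesis
    proof (cases "nc x")
      case True
      then have "\<not> nc y" using False by simp
      then show ?thesis using False Zv_can[of y x v] assms by (simp add: Zv_sym)
    next
      case False
      then show ?thesis using Zv_can[of x y v] assms by simp
    qed
  qed
  finally show ?thesis .
qed

lemma yz_sum:
  assumes "1 \<le> a" "a \<le> n1" "1 \<le> x" "x \<le> nk"
  shows "Rs (yzF a x) v = Yv a x v"
proof (cases "nc x")
  case True
  have t: "(a, x) \<in> Pk" using assms True by (auto simp: Pset_def)
  have "Rs (yzF a x) v = (if nc x then bvec (a, x) v else 0)"
    unfolding yzF_def by (rule Rs_ind[OF t])
  then show ?thesis using True assms by (simp add: bvec_def)
next
  case False
  have "Rs (yzF a x) v = 0" using False by (simp add: yzF_def Rs_def)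
  then show ?thesis using Yv_can[of x a v] False assms by simp
qed

lemma yy_sum:
  assumes "1 \<le> a" "a \<le> n1" "1 \<le> b" "b \<le> n1"
  shows "Rs (yyF a b) v = Ev a b v"
proof -
  have nn: "q + p \<le> q + k * p" by (rule n1_le_nk)
  have t: "srt (a, b) \<in> Pk" using assms nn by (intro srt_in_Pset) linarith+
  have "Rs (yyF a b) v = (if True then bvec (srt (a,b)) v else 0)"
    unfolding yyF_def using Rs_ind[OF t, of True] by simp
  also have "\<dots> = Ev (min a b) (max a b) v"
  proof -
    have "\<not> nc (max a b)" using assms by simp
    then show ?thesis by (simp add: bvec_def srt_def)
  qed
  also have "\<dots> = Ev a b v" by (cases "a \<le> b") (auto simp: min_def max_def Ev_sym)
  finally show ?thesis .
qed

definition Fcol :: "(nat \<Rightarrow> nat \<Rightarrow> label) \<Rightarrow> nat \<times> nat \<Rightarrow> nat \<times> nat \<Rightarrow> complex" where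
 "Fcol l w = (let a = fst w; b = snd w in
   if \<not> nc b then
     (case l a b of
        N \<Rightarrow> (\<lambda>w'. zzF (sg a) (sg b) w' + yzF (pi (sg a)) (sg b) w' + yzF (pi (sg b)) (sg a) w' + yyF (pi (sg a)) (pi (sg b)) w')
      | S \<Rightarrow> (\<lambda>w'. yzF 1 (sg a) w' + yyF 1 (pi (sg a)) w' + yzF 1 (sg b) w' + yyF 1 (pi (sg b)) w')
      | E \<Rightarrow> (\<lambda>w'. 0))
   else if \<not> nc a then
     (case l a (pi b) of
        N \<Rightarrow> (\<lambda>w'. yzF (pi (sg a)) (sg b) w' - yzF (pi (sg a)) (sg (pi b)) w' + zzF (sg a) (sg b) w' - zzF (sg a) (sg (pi b)) w')
      | S \<Rightarrow> (\<lambda>w'. yzF 1 (sg b) w' - yzF 1 (sg (pi b)) w')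
      | E \<Rightarrow> (\<lambda>w'. 0))
   else
     (if l (pi a) (pi b) = N then (\<lambda>w'. zzF (sg a) (sg b) w' - zzF (sg a) (sg (pi b)) w' - zzF (sg (pi a)) (sg b) w' + zzF (sg (pi a)) (sg (pi b)) w')
      else (\<lambda>w'. 0)))"

lemma sgb: "1 \<le> sg c" "sg c \<le> nk" by (rule sg_ge1, rule sg_le)
lemma pisgb: "1 \<le> pi (sg c)" "pi (sg c) \<le> n1" by (rule pi_ge1[OF sg_ge1], rule pi_le)

lemma Ev1_split: "Ev 1 x v = Yv 1 x v + Ev 1 (pi x) v" by (simp add: Yv_def)

lemma column:
  assumes sym: "\<And>a b. l a b = l b a" and w: "w \<in> Pk"
  shows "Mv l (bvec w) v = Rs (Fcol l w) v"
proof -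
  obtain a b where ab: "w = (a, b)" by (cases w)
  have ab': "1 \<le> a" "a \<le> b" "b \<le> nk" using w ab by (auto simp: Pset_def)
  have piab: "1 \<le> pi b" "pi b \<le> nk" "1 \<le> pi a" "pi a \<le> nk"
    using pi_ge1[of b] pi_ge1[of a] pi_le[of a] pi_le[of b] ab' p_le_kp by linarith+
  note MvE = Mv_Ev[OF sym]
  have one_n1: "1 \<le> n1" using p1 by simp
  note zzs = zz_sum[OF sgb(1) sgb(2) sgb(1) sgb(2)]
  note yzs = yz_sum[OF pisgb(1) pisgb(2) sgb(1) sgb(2)]
  have yz1: "Rs (yzF (Suc 0) (sg c)) v' = Yv (Suc 0) (sg c) v'" for c v'
    by (rule yz_sum) (use one_n1 sgb[of c] in auto)
  have yy1: "Rs (yyF (Suc 0) (pi (sg c))) v' = Ev (Suc 0) (pi (sg c)) v'" for c v'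
    by (rule yy_sum) (use one_n1 pisgb[of c] in auto)
  note yys = yy_sum[OF pisgb(1) pisgb(2) pisgb(1) pisgb(2)]
  show ?thesis
  proof (cases "nc b")
    case False
    then have na: "\<not> nc a" using ab' by simp
    have pa: "pi a = a" "pi b = b" using na False ab' by (auto intro!: pi_id)
    have lhs: "Mv l (bvec w) v = TE l a b v"
      using False ab' by (simp add: bvec_def ab MvE)
    show ?thesis
    proof (cases "l a b")
      case N
      have "TE l a b v = Ev (sg a) (sg b) v" using N pa by (simp add: TE_def)
      also have "\<dots> = Zv (sg a) (sg b) v + Yv (pi (sg a)) (sg b) v + Yv (pi (sg b)) (sg a) v + Ev (pi (sg a)) (pi (sg b)) v"
        by (rule Ev_decomp)
      also have "\<dots> = Rs (Fcol l w) v"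
        using N False na by (simp add: Fcol_def ab Rs_add zzs yzs yz1 yy1 yys)
      finally show ?thesis using lhs by simp
    next
      case S
      have "TE l a b v = Ev 1 (sg a) v + Ev 1 (sg b) v" using S pa by (simp add: TE_def)
      also have "\<dots> = Yv 1 (sg a) v + Ev 1 (pi (sg a)) v + Yv 1 (sg b) v + Ev 1 (pi (sg b)) v"
        by (simp add: Yv_def)
      also have "\<dots> = Rs (Fcol l w) v"
        using S False na by (simp add: Fcol_def ab Rs_add zzs yzs yz1 yy1 yys)
      finally show ?thesis using lhs by simp
    next
      case E
      have "TE l a b v = 0" using E pa by (simp add: TE_def)
      then show ?thesis using lhs E False na by (simp add: Fcol_def ab Rs_zero)
    qed
  next
    case nb: True
    show ?thesis
    proof (cases "nc a")
      case False
      have pa: "pi a = a" using False ab' by (auto intro!: pi_id)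
      have lhs: "Mv l (bvec w) v = TE l a b v - TE l a (pi b) v"
        using False nb ab' piab by (simp add: bvec_def ab Yv_def Mv_diff MvE)
      have lab: "l (pi a) (pi (pi b)) = l a (pi b)" "l (pi a) (pi b) = l a (pi b)" by (simp_all add: pa pi_pi)
      show ?thesis
      proof (cases "l a (pi b)")
        case N
        have "TE l a b v - TE l a (pi b) v = Ev (sg a) (sg b) v - Ev (sg a) (sg (pi b)) v"
          using N lab by (simp add: TE_def)
        also have "\<dots> = Yv (pi (sg a)) (sg b) v - Yv (pi (sg a)) (sg (pi b)) v + Zv (sg a) (sg b) v - Zv (sg a) (sg (pi b)) v"
          using Ev_decomp[of "sg a" "sg b" v] Ev_decomp[of "sg a" "sg (pi b)" v] by (simp add: pi_sg_pi)
        also have "\<dots> = Rs (Fcol l w) v"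
          using N False nb by (simp add: Fcol_def ab Rs_add Rs_diff zzs yzs yz1)
        finally show ?thesis using lhs by simp
      next
        case S
        have "TE l a b v - TE l a (pi b) v = Ev 1 (sg b) v - Ev 1 (sg (pi b)) v"
          using S lab by (simp add: TE_def)
        also have "\<dots> = Yv 1 (sg b) v - Yv 1 (sg (pi b)) v"
          by (simp add: Yv_def pi_sg_pi)
        also have "\<dots> = Rs (Fcol l w) v"
          using S False nb by (simp add: Fcol_def ab Rs_add Rs_diff yz1)
        finally show ?thesis using lhs by simp
      next
        case E
        have "TE l a b v - TE l a (pi b) v = 0" using E lab by (simp add: TE_def)
        then show ?thesis using lhs E False nb by (simp add: Fcol_def ab Rs_zero)
      qed
    next
      case na: True
      have lhs: "Mv l (bvec w) v = TE l a b v - TE l a (pi b) v - TE l (pi a) b v + TE l (pi a) (pi b) v"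
        using na nb ab' piab by (simp add: bvec_def ab Zv_def Mv_diff Mv_add MvE)
      have lab: "l (pi a) (pi (pi b)) = l (pi a) (pi b)" "l (pi (pi a)) (pi b) = l (pi a) (pi b)"
        "l (pi (pi a)) (pi (pi b)) = l (pi a) (pi b)" by (simp_all add: pi_pi)
      show ?thesis
      proof (cases "l (pi a) (pi b)")
        case N
        have "TE l a b v - TE l a (pi b) v - TE l (pi a) b v + TE l (pi a) (pi b) v
            = Ev (sg a) (sg b) v - Ev (sg a) (sg (pi b)) v - Ev (sg (pi a)) (sg b) v + Ev (sg (pi a)) (sg (pi b)) v"
          using N lab by (simp add: TE_def)
        also have "\<dots> = Zv (sg a) (sg b) v - Zv (sg a) (sg (pi b)) v - Zv (sg (pi a)) (sg b) v + Zv (sg (pi a)) (sg (pi b)) v"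
          using Ev_decomp[of "sg a" "sg b" v] Ev_decomp[of "sg a" "sg (pi b)" v]
            Ev_decomp[of "sg (pi a)" "sg b" v] Ev_decomp[of "sg (pi a)" "sg (pi b)" v]
          by (simp add: pi_sg_pi)
        also have "\<dots> = Rs (Fcol l w) v"
          using N na nb by (simp add: Fcol_def ab Rs_add Rs_diff zzs)
        finally show ?thesis using lhs by simp
      next
        case S
        have "TE l a b v - TE l a (pi b) v - TE l (pi a) b v + TE l (pi a) (pi b) v = 0"
          using S lab by (simp add: TE_def)
        then show ?thesis using lhs S na nb by (simp add: Fcol_def ab Rs_zero)
      next
        case E
        have "TE l a b v - TE l a (pi b) v - TE l (pi a) b v + TE l (pi a) (pi b) v = 0"
          using E lab by (simp add: TE_def)
        then show ?thesis using lhs E na nb by (simp add: Fcol_def ab Rs_zero)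
      qed
    qed
  qed
qed

end


context wsys begin

definition L1 :: "(nat \<times> nat) set" where
  "L1 = {(a,b). 1 \<le> a \<and> a \<le> n1 \<and> n1 < b \<and> b \<le> nk}"
definition L2 :: "(nat \<times> nat) set" where
  "L2 = {(a,b). n1 < a \<and> a \<le> b \<and> b \<le> nk}"

lemma finite_L1: "finite L1"
  by (rule finite_subset[of _ "{1..nk} \<times> {1..nk}"]) (auto simp: L1_def)
lemma finite_L2: "finite L2"
  by (rule finite_subset[of _ "{1..nk} \<times> {1..nk}"]) (auto simp: L2_def)

lemma Pk_split: "Pk = L2 \<union> (L1 \<union> Pset p)"
  by (auto simp: L1_def L2_def Pset_def intro: le_trans[OF _ n1_le_nk])

definition DYZ :: "(nat \<Rightarrow> nat \<Rightarrow> label) \<Rightarrow> nat \<times> nat \<Rightarrow> nat \<times> nat \<Rightarrow> complex" where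
  "DYZ l w' w = (case l (fst w) (pi (snd w)) of
      N \<Rightarrow> yzF (pi (sg (fst w))) (sg (snd w)) w' - yzF (pi (sg (fst w))) (sg (pi (snd w))) w'
    | S \<Rightarrow> yzF 1 (sg (snd w)) w' - yzF 1 (sg (pi (snd w))) w'
    | E \<Rightarrow> 0)"

lemma zzF_nc: "zzF x y w' \<noteq> 0 \<Longrightarrow> nc (fst w') \<and> nc (snd w')"
  by (auto simp: zzF_def srt_def split: if_splits)
lemma yzF_nc: "yzF a x w' \<noteq> 0 \<Longrightarrow> nc (snd w') \<and> fst w' = a"
  by (auto simp: yzF_def split: if_splits)

lemma A_cols:
  assumes sym: "\<And>a b. l a b = l b a"
  shows "cp Pk (adjm (k * p) l) = cp Pk (\<lambda>w' w. Fcol l w w')"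
proof (rule basis_change[where X=Pk and h=hh and N="\<lambda>y w. bvec w y - (if y = w then 1 else 0)" and M="adjm (k * p) l", OF finite_Pset])
  show "\<And>x. x \<in> Pk \<Longrightarrow> hh x \<le> 2" by (rule hh_le2)
  show "\<And>x y. x \<in> Pk \<Longrightarrow> y \<in> Pk \<Longrightarrow> bvec x y - (if y = x then 1 else 0) \<noteq> 0 \<Longrightarrow> hh y < hh x"
    by (rule bvec_tri)
  fix C assume C1: "cp Pk C = cp Pk (adjm (k * p) l)"
    and C2: "\<And>w F. w \<in> Pk \<Longrightarrow>
       (\<And>y. y \<in> Pk \<Longrightarrow> (\<Sum>x\<in>Pk. adjm (k * p) l y x * ((if x = w then 1 else 0) + (bvec w x - (if x = w then 1 else 0))))
            = (\<Sum>w'\<in>Pk. ((if y = w' then 1 else 0) + (bvec w' y - (if y = w' then 1 else 0))) * F w'))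
       \<Longrightarrow> (\<And>w'. w' \<in> Pk \<Longrightarrow> C w' w = F w')"
  have CF: "C w' w = Fcol l w w'" if "w \<in> Pk" "w' \<in> Pk" for w w'
  proof (rule C2[OF that(1) _ that(2)])
    fix y assume "y \<in> Pk"
    show "(\<Sum>x\<in>Pk. adjm (k * p) l y x * ((if x = w then 1 else 0) + (bvec w x - (if x = w then 1 else 0))))
            = (\<Sum>w'\<in>Pk. ((if y = w' then 1 else 0) + (bvec w' y - (if y = w' then 1 else 0))) * Fcol l w w')"
      using column[where l=l and w=w and v=y, OF sym that(1)] by (simp add: Mv_def Rs_def)
  qed
  show ?thesis
    using C1 cp_cong[where M=C and M'="\<lambda>w' w. Fcol l w w'", OF _ finite_Pset] CF by simp
qed

lemma A_decomp:
  assumes sym: "\<And>a b. l a b = l b a"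
  shows "cp Pk (adjm (k * p) l) = cp L2 (\<lambda>w' w. Fcol l w w') * (cp L1 (DYZ l) * cp (Pset p) (adjm p l))"
proof -
  have "cp Pk (adjm (k * p) l) = cp Pk (\<lambda>w' w. Fcol l w w')" by (rule A_cols[OF sym])
  also have "\<dots> = cp L2 (\<lambda>w' w. Fcol l w w') * cp (L1 \<union> Pset p) (\<lambda>w' w. Fcol l w w')"
  proof (subst Pk_split, rule cp_block)
    show "finite L2" "finite (L1 \<union> Pset p)" by (simp_all add: finite_L1 finite_L2 finite_Pset)
    show "L2 \<inter> (L1 \<union> Pset p) = {}" by (auto simp: L1_def L2_def Pset_def)
    fix x y assume x: "x \<in> L2" and y: "y \<in> L1 \<union> Pset p"
    then have "\<not> nc (fst y)" by (auto simp: L1_def Pset_def)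
    moreover obtain a b where ab: "x = (a,b)" "nc a" "nc b" using x by (auto simp: L2_def)
    moreover have z1: "zzF u v y = 0" for u v using zzF_nc[of u v y] calculation(1) by auto
    ultimately show "Fcol l x y = 0"
      by (auto simp: Fcol_def Let_def)
  qed
  also have "cp (L1 \<union> Pset p) (\<lambda>w' w. Fcol l w w') = cp L1 (\<lambda>w' w. Fcol l w w') * cp (Pset p) (\<lambda>w' w. Fcol l w w')"
  proof (rule cp_block)
    show "finite L1" "finite (Pset p)" by (simp_all add: finite_L1 finite_Pset)
    show "L1 \<inter> Pset p = {}" by (auto simp: L1_def Pset_def)
    fix x y assume x: "x \<in> L1" and y: "y \<in> Pset p"
    then have "\<not> nc (snd y)" by (auto simp: Pset_def)
    moreover obtain a b where ab: "x = (a,b)" "\<not> nc a" "nc b" using x by (auto simp: L1_def)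
    moreover have z1: "zzF u v y = 0" for u v using zzF_nc[of u v y] calculation(1) by auto
    moreover have z2: "yzF u v y = 0" for u v using yzF_nc[of u v y] calculation(1) by auto
    ultimately show "Fcol l x y = 0"
      by (auto simp: Fcol_def Let_def split: label.split)
  qed
  also have "cp L1 (\<lambda>w' w. Fcol l w w') = cp L1 (DYZ l)"
  proof (rule cp_cong[OF _ finite_L1])
    fix x y assume x: "x \<in> L1" and y: "y \<in> L1"
    then have "\<not> nc (fst y)" by (auto simp: L1_def)
    moreover obtain a b where ab: "x = (a,b)" "\<not> nc a" "nc b" using x by (auto simp: L1_def)
    moreover have z1: "zzF u v y = 0" for u v using zzF_nc[of u v y] calculation(1) by auto
    ultimately show "Fcol l x y = DYZ l y x"
      by (auto simp: Fcol_def DYZ_def Let_def split: label.split)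
  qed
  also have "cp (Pset p) (\<lambda>w' w. Fcol l w w') = cp (Pset p) (adjm p l)"
  proof (rule cp_cong[OF _ finite_Pset])
    fix x y assume x: "x \<in> Pset p" and y: "y \<in> Pset p"
    obtain a b where ab: "x = (a,b)" "1 \<le> a" "a \<le> b" "b \<le> n1" using x by (auto simp: Pset_def)
    have ny: "\<not> nc (fst y)" "\<not> nc (snd y)" using y by (auto simp: Pset_def)
    have z1: "zzF u v y = 0" for u v using zzF_nc[of u v y] ny by auto
    have z2: "yzF u v y = 0" for u v using yzF_nc[of u v y] ny by auto
    have pa: "pi a = a" "pi b = b" using ab by (auto intro!: pi_id)
    have tg: "targ p l (a, b) = (case l a b of E \<Rightarrow> [] | N \<Rightarrow> [srt (pi (sg a), pi (sg b))]
      | S \<Rightarrow> [(1, pi (sg a)), (1, pi (sg b))])"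
      by (simp add: targ_def pa pi_sg split: label.split)
    have s1: "srt (Suc 0, pi (sg c)) = (Suc 0, pi (sg c))" for c
      using pisgb(1)[of c] by (simp add: srt_def)
    show "Fcol l x y = adjm p l y x"
      using ab by (cases "l a b") (auto simp: Fcol_def Let_def z1 z2 adjm_def tg yyF_def s1)
  qed
  finally show ?thesis by (simp add: mult.assoc)
qed

end


context wsys begin

definition XP :: "nat \<Rightarrow> (nat \<times> nat) set" where
  "XP K = {(a,c). 1 \<le> a \<and> a \<le> n1 \<and> 1 \<le> c \<and> c \<le> q + K}"

lemma finite_XP: "finite (XP K)"
  by (rule finite_subset[of _ "{1..n1} \<times> {1..q+K}"]) (auto simp: XP_def)

definition phiP :: "nat \<Rightarrow> (nat \<Rightarrow> nat \<Rightarrow> label) \<Rightarrow> nat \<times> nat \<Rightarrow> (nat \<times> nat) option" where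
  "phiP K l w = (case l (fst w) (pi (snd w)) of
      N \<Rightarrow> Some (pi (can K q (fst w + 1)), can K q (snd w + 1))
    | S \<Rightarrow> Some (1, can K q (snd w + 1))
    | E \<Rightarrow> None)"

definition PsiM :: "nat \<Rightarrow> (nat \<Rightarrow> nat \<Rightarrow> label) \<Rightarrow> nat \<times> nat \<Rightarrow> nat \<times> nat \<Rightarrow> complex" where
  "PsiM K l y x = (if phiP K l x = Some y then 1 else 0)"

lemma Psi_cyc: "cyc_form (cp (XP K) (PsiM K l))"
  by (rule partial_map_cyc[where \<phi> = "phiP K l"]) (auto simp: finite_XP PsiM_def)

lemma adjm_noS_cyc:
  assumes noS: "\<And>a b. l a b \<noteq> S"
  shows "cyc_form (cp (Pset K) (adjm K l))"
proof (rule partial_map_cyc[where \<phi> = "\<lambda>x. case targ K l x of [] \<Rightarrow> None | t # _ \<Rightarrow> Some t"])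
  show "finite (Pset K)" by (rule finite_Pset)
  fix x y
  show "adjm K l y x = (if (case targ K l x of [] \<Rightarrow> None | t # _ \<Rightarrow> Some t) = Some y then 1 else 0)"
    using noS[of "pi (fst x)" "pi (snd x)"]
    by (cases "l (pi (fst x)) (pi (snd x))") (auto simp: adjm_def targ_def)
qed

abbreviation "XPk \<equiv> XP (k * p)"

definition ub :: "nat \<times> nat \<Rightarrow> nat \<times> nat \<Rightarrow> complex" where
  "ub w = (\<lambda>y. (if y = w then 1 else 0) - (if nc (snd w) \<and> y = (fst w, pi (snd w)) then 1 else 0))"

definition hP :: "nat \<times> nat \<Rightarrow> nat" where "hP w = (if nc (snd w) then 1 else 0)"

lemma ub_tri:
  assumes "ub w y - (if y = w then 1 else 0) \<noteq> 0"
  shows "hP y < hP w"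
  using assms pi_not_nc by (auto simp: ub_def hP_def split: if_splits)

definition Mp :: "(nat \<Rightarrow> nat \<Rightarrow> label) \<Rightarrow> (nat \<times> nat \<Rightarrow> complex) \<Rightarrow> nat \<times> nat \<Rightarrow> complex" where
  "Mp l v y = (\<Sum>x\<in>XPk. PsiM (k * p) l y x * v x)"

definition Rp :: "(nat \<times> nat \<Rightarrow> complex) \<Rightarrow> nat \<times> nat \<Rightarrow> complex" where
  "Rp F y = (\<Sum>w'\<in>XPk. ub w' y * F w')"

lemma Rp_add: "Rp (\<lambda>w. F w + G w) v = Rp F v + Rp G v"
  by (simp add: Rp_def distrib_left sum.distrib)
lemma Rp_diff: "Rp (\<lambda>w. F w - G w) v = Rp F v - Rp G v"
  by (simp add: Rp_def right_diff_distrib sum_subtractf)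
lemma Rp_zero: "Rp (\<lambda>w. 0) v = 0"
  by (simp add: Rp_def)

lemma Rp_ind: "t \<in> XPk \<Longrightarrow> Rp (\<lambda>w'. if P \<and> w' = t then 1 else 0) v = (if P then ub t v else 0)"
proof -
  assume t: "t \<in> XPk"
  have "Rp (\<lambda>w'. if P \<and> w' = t then 1 else 0) v = (\<Sum>w'\<in>XPk. if w' = t then (if P then ub w' v else 0) else 0)"
    unfolding Rp_def by (rule sum.cong) auto
  also have "\<dots> = (if P then ub t v else 0)" using t finite_XP by simp
  finally show ?thesis .
qed

definition Uv :: "nat \<Rightarrow> nat \<Rightarrow> nat \<times> nat \<Rightarrow> complex" where
  "Uv b x = (\<lambda>y. (if y = (b, x) then 1 else 0) - (if y = (b, pi x) then 1 else 0))"

lemma yzP_sum: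
  assumes "1 \<le> b" "b \<le> n1" "1 \<le> x" "x \<le> nk"
  shows "Rp (yzF b x) v = Uv b x v"
proof (cases "nc x")
  case True
  have t: "(b, x) \<in> XPk" using assms by (auto simp: XP_def)
  have "Rp (yzF b x) v = (if nc x then ub (b, x) v else 0)"
    unfolding yzF_def by (rule Rp_ind[OF t])
  then show ?thesis using True by (simp add: ub_def Uv_def)
next
  case False
  have "Rp (yzF b x) v = 0" using False by (simp add: yzF_def Rp_def)
  moreover have "pi x = x" using False assms by (intro pi_id) auto
  ultimately show ?thesis by (simp add: Uv_def)
qed

lemma indP_sum:
  assumes "1 \<le> b" "b \<le> n1" "1 \<le> x" "x \<le> n1"
  shows "Rp (\<lambda>w'. if w' = (b, x) then 1 else 0) v = (if v = (b, x) then 1 else 0)"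
proof -
  have t: "(b, x) \<in> XPk" using assms p_le_kp by (auto simp: XP_def intro: le_trans[OF _ n1_le_nk])
  have "Rp (\<lambda>w'. if True \<and> w' = (b, x) then 1 else 0) v = (if True then ub (b, x) v else 0)"
    by (rule Rp_ind[OF t])
  then show ?thesis using assms by (simp add: ub_def)
qed

lemma Mp_ind:
  assumes "t \<in> XPk"
  shows "Mp l (\<lambda>x. if x = t then 1 else 0) y = (if phiP (k * p) l t = Some y then 1 else 0)"
proof -
  have "Mp l (\<lambda>x. if x = t then 1 else 0) y = (\<Sum>x\<in>XPk. if x = t then PsiM (k * p) l y x else 0)"
    unfolding Mp_def by (rule sum.cong) auto
  also have "\<dots> = PsiM (k * p) l y t" using assms finite_XP by simp
  finally show ?thesis by (simp add: PsiM_def)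
qed

lemma Mp_diff: "Mp l (\<lambda>x. f x - g x) y = Mp l f y - Mp l g y"
  by (simp add: Mp_def right_diff_distrib sum_subtractf)

definition Pcol :: "(nat \<Rightarrow> nat \<Rightarrow> label) \<Rightarrow> nat \<times> nat \<Rightarrow> nat \<times> nat \<Rightarrow> complex" where
  "Pcol l w = (let a = fst w; c = snd w in
    if nc c then
      (case l a (pi c) of
         N \<Rightarrow> (\<lambda>w'. yzF (pi (sg a)) (sg c) w' - yzF (pi (sg a)) (sg (pi c)) w')
       | S \<Rightarrow> (\<lambda>w'. yzF 1 (sg c) w' - yzF 1 (sg (pi c)) w')
       | E \<Rightarrow> (\<lambda>w'. 0))
    else
      (case l a c of
         N \<Rightarrow> (\<lambda>w'. yzF (pi (sg a)) (sg c) w' + (if w' = (pi (sg a), pi (sg c)) then 1 else 0))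
       | S \<Rightarrow> (\<lambda>w'. yzF 1 (sg c) w' + (if w' = (1, pi (sg c)) then 1 else 0))
       | E \<Rightarrow> (\<lambda>w'. 0)))"

lemma phiP_k: "phiP (k * p) l (a, c) = (case l a (pi c) of N \<Rightarrow> Some (pi (sg a), sg c)
   | S \<Rightarrow> Some (1, sg c) | E \<Rightarrow> None)"
  by (simp add: phiP_def sg_def split: label.split)

lemma Pcolumn:
  assumes w: "w \<in> XPk"
  shows "Mp l (ub w) v = Rp (Pcol l w) v"
proof -
  obtain a c where ac: "w = (a, c)" by (cases w)
  have ac': "1 \<le> a" "a \<le> n1" "1 \<le> c" "c \<le> nk" using w ac by (auto simp: XP_def)
  have one_n1: "1 \<le> n1" using p1 by simp
  have yz1: "Rp (yzF (Suc 0) (sg x)) v' = Uv (Suc 0) (sg x) v'" for x v'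
    by (rule yzP_sum) (use one_n1 sgb[of x] in auto)
  have yzs: "Rp (yzF (pi (sg y)) (sg x)) v' = Uv (pi (sg y)) (sg x) v'" for x y v'
    by (rule yzP_sum) (use pisgb[of y] sgb[of x] in auto)
  have ind1: "Rp (\<lambda>w'. if w' = (Suc 0, pi (sg x)) then 1 else 0) v' = (if v' = (Suc 0, pi (sg x)) then 1 else 0)" for x v'
    by (rule indP_sum) (use one_n1 pisgb[of x] in auto)
  have inds: "Rp (\<lambda>w'. if w' = (pi (sg y), pi (sg x)) then 1 else 0) v' = (if v' = (pi (sg y), pi (sg x)) then 1 else 0)" for x y v'
    by (rule indP_sum) (use pisgb[of x] pisgb[of y] in auto)
  show ?thesis
  proof (cases "nc c")
    case True
    have t1: "(a, c) \<in> XPk" "(a, pi c) \<in> XPk" using ac' pi_ge1[of c] pi_le[of c] p_le_kp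
      by (auto simp: XP_def intro: le_trans[OF _ n1_le_nk])
    have lhs: "Mp l (ub w) v = (if phiP (k * p) l (a, c) = Some v then 1 else 0) - (if phiP (k * p) l (a, pi c) = Some v then 1 else 0)"
    proof -
      have "ub w = (\<lambda>y. (if y = (a, c) then 1 else 0) - (if y = (a, pi c) then 1 else 0))"
        using True by (auto simp: ub_def ac)
      then show ?thesis using Mp_diff[of l] Mp_ind[OF t1(1)] Mp_ind[OF t1(2)] by simp
    qed
    show ?thesis
    proof (cases "l a (pi c)")
      case N
      then show ?thesis using True lhs
        by (simp add: phiP_k pi_pi Pcol_def ac Rp_diff yzs Uv_def pi_sg_pi)
    next
      case S
      then show ?thesis using True lhs
        by (simp add: phiP_k pi_pi Pcol_def ac Rp_diff yz1 Uv_def pi_sg_pi)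
    next
      case E
      then show ?thesis using True lhs
        by (simp add: phiP_k pi_pi Pcol_def ac Rp_zero)
    qed
  next
    case False
    have pc: "pi c = c" using False ac' by (intro pi_id) auto
    have t1: "(a, c) \<in> XPk" using ac' by (auto simp: XP_def)
    have lhs: "Mp l (ub w) v = (if phiP (k * p) l (a, c) = Some v then 1 else 0)"
    proof -
      have "ub w = (\<lambda>y. (if y = (a, c) then 1 else 0))"
        using False by (auto simp: ub_def ac)
      then show ?thesis using Mp_ind[OF t1] by simp
    qed
    show ?thesis
    proof (cases "l a c")
      case N
      then show ?thesis using False lhs pc
        by (simp add: phiP_k Pcol_def ac Rp_add yzs inds Uv_def)
    next
      case S
      then show ?thesis using False lhs pc
        by (simp add: phiP_k Pcol_def ac Rp_add yz1 ind1 Uv_def)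
    next
      case E
      then show ?thesis using False lhs pc
        by (simp add: phiP_k Pcol_def ac Rp_zero)
    qed
  qed
qed

end


context wsys begin

lemma XPk_split: "XPk = L1 \<union> XP p"
  by (auto simp: L1_def XP_def intro: le_trans[OF _ n1_le_nk])

lemma Psi_cols: "cp XPk (PsiM (k * p) l) = cp XPk (\<lambda>w' w. Pcol l w w')"
proof (rule basis_change[where X=XPk and h=hP and N="\<lambda>y w. ub w y - (if y = w then 1 else 0)" and M="PsiM (k * p) l", OF finite_XP])
  show "\<And>x. x \<in> XPk \<Longrightarrow> hP x \<le> 2" by (simp add: hP_def)
  show "\<And>x y. x \<in> XPk \<Longrightarrow> y \<in> XPk \<Longrightarrow> ub x y - (if y = x then 1 else 0) \<noteq> 0 \<Longrightarrow> hP y < hP x"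
    by (rule ub_tri)
  fix C assume C1: "cp XPk C = cp XPk (PsiM (k * p) l)"
    and C2: "\<And>w F. w \<in> XPk \<Longrightarrow>
       (\<And>y. y \<in> XPk \<Longrightarrow> (\<Sum>x\<in>XPk. PsiM (k * p) l y x * ((if x = w then 1 else 0) + (ub w x - (if x = w then 1 else 0))))
            = (\<Sum>w'\<in>XPk. ((if y = w' then 1 else 0) + (ub w' y - (if y = w' then 1 else 0))) * F w'))
       \<Longrightarrow> (\<And>w'. w' \<in> XPk \<Longrightarrow> C w' w = F w')"
  have CF: "C w' w = Pcol l w w'" if "w \<in> XPk" "w' \<in> XPk" for w w'
  proof (rule C2[OF that(1) _ that(2)])
    fix y assume "y \<in> XPk"
    show "(\<Sum>x\<in>XPk. PsiM (k * p) l y x * ((if x = w then 1 else 0) + (ub w x - (if x = w then 1 else 0))))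
            = (\<Sum>w'\<in>XPk. ((if y = w' then 1 else 0) + (ub w' y - (if y = w' then 1 else 0))) * Pcol l w w')"
      using Pcolumn[where l=l and w=w and v=y, OF that(1)] by (simp add: Mp_def Rp_def)
  qed
  show ?thesis
    using C1 cp_cong[where M=C and M'="\<lambda>w' w. Pcol l w w'", OF _ finite_XP] CF by simp
qed

lemma Psi_decomp: "cp XPk (PsiM (k * p) l) = cp L1 (DYZ l) * cp (XP p) (PsiM p l)"
proof -
  have "cp XPk (PsiM (k * p) l) = cp XPk (\<lambda>w' w. Pcol l w w')" by (rule Psi_cols)
  also have "\<dots> = cp L1 (\<lambda>w' w. Pcol l w w') * cp (XP p) (\<lambda>w' w. Pcol l w w')"
  proof (subst XPk_split, rule cp_block)
    show "finite L1" "finite (XP p)" by (simp_all add: finite_L1 finite_XP)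
    show "L1 \<inter> XP p = {}" by (auto simp: L1_def XP_def)
    fix x y assume x: "x \<in> L1" and y: "y \<in> XP p"
    then have ny: "\<not> nc (snd y)" by (auto simp: XP_def)
    have z2: "yzF u v y = 0" for u v using yzF_nc[of u v y] ny by auto
    obtain a b where ab: "x = (a,b)" "nc b" using x by (auto simp: L1_def)
    then show "Pcol l x y = 0" by (auto simp: Pcol_def Let_def z2 split: label.split)
  qed
  also have "cp L1 (\<lambda>w' w. Pcol l w w') = cp L1 (DYZ l)"
  proof (rule cp_cong[OF _ finite_L1])
    fix x y assume x: "x \<in> L1" and y: "y \<in> L1"
    obtain a b where ab: "x = (a,b)" "nc b" using x by (auto simp: L1_def)
    then show "Pcol l x y = DYZ l y x" by (auto simp: Pcol_def DYZ_def Let_def split: label.split)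
  qed
  also have "cp (XP p) (\<lambda>w' w. Pcol l w w') = cp (XP p) (PsiM p l)"
  proof (rule cp_cong[OF _ finite_XP])
    fix x y assume x: "x \<in> XP p" and y: "y \<in> XP p"
    then have ny: "\<not> nc (snd y)" by (auto simp: XP_def)
    have z2: "yzF u v y = 0" for u v using yzF_nc[of u v y] ny by auto
    obtain a c where ac: "x = (a,c)" "1 \<le> c" "c \<le> n1" using x by (auto simp: XP_def)
    have pc: "pi c = c" using ac by (intro pi_id) auto
    have e1: "pi (can p q (Suc a)) = pi (sg a)" using pi_sg[of a] by (simp add: pi_def can_idem[OF p1])
    have e2: "can p q (Suc c) = pi (sg c)" using pi_sg[of c] by simp
    show "Pcol l x y = PsiM p l y x"
      using ac pc by (cases "l a c") (auto simp: Pcol_def Let_def z2 PsiM_def phiP_def e1 e2)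
  qed
  finally show ?thesis .
qed

definition noS :: "(nat \<Rightarrow> nat \<Rightarrow> label) \<Rightarrow> nat \<Rightarrow> nat \<Rightarrow> label" where
  "noS l a b = (if l a b = S then E else l a b)"

lemma main_cyc:
  assumes sym: "\<And>a b. l a b = l b a"
  shows "\<exists>G. cyc_form G \<and> cp Pk (adjm (k * p) l) = cp (Pset p) (adjm p l) * G"
proof -
  define l' where "l' = noS l"
  have sym': "\<And>a b. l' a b = l' b a" using sym by (simp add: l'_def noS_def)
  have noS': "\<And>a b. l' a b \<noteq> S" by (simp add: l'_def noS_def)
  have FF: "cp L2 (\<lambda>w' w. Fcol l' w w') = cp L2 (\<lambda>w' w. Fcol l w w')"
  proof (rule cp_cong[OF _ finite_L2])
    fix x y assume x: "x \<in> L2"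
    obtain a b where ab: "x = (a,b)" "nc a" "nc b" using x by (auto simp: L2_def)
    have "(l' (pi a) (pi b) = N) = (l (pi a) (pi b) = N)" by (simp add: l'_def noS_def)
    then show "Fcol l' x y = Fcol l x y" using ab by (simp add: Fcol_def Let_def)
  qed
  have Y: "cyc_form (cp L1 (DYZ l))"
    by (rule cyc_form_div[OF Psi_cyc[where K=p and l=l] Psi_cyc[where K="k*p" and l=l]]) (simp add: Psi_decomp mult.commute)
  have Y': "cyc_form (cp L1 (DYZ l'))"
    by (rule cyc_form_div[OF Psi_cyc[where K=p and l=l'] Psi_cyc[where K="k*p" and l=l']]) (simp add: Psi_decomp mult.commute)
  have Z: "cyc_form (cp L2 (\<lambda>w' w. Fcol l w w'))"
  proof (rule cyc_form_div[OF cyc_form_mult[OF Y' adjm_noS_cyc[where K=p, OF noS']] adjm_noS_cyc[where K="k*p", OF noS']])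
    show "cp L1 (DYZ l') * cp (Pset p) (adjm p l') * cp L2 (\<lambda>w' w. Fcol l w w') = cp Pk (adjm (k * p) l')"
      using A_decomp[OF sym'] FF by (simp add: mult.commute mult.left_commute)
  qed
  show ?thesis
    using A_decomp[OF sym] cyc_form_mult[OF Y Z]
    by (intro exI[of _ "cp L1 (DYZ l) * cp L2 (\<lambda>w' w. Fcol l w w')"]) (simp add: mult.commute mult.left_commute)
qed

end


lemma can_ge1': "Suc 0 \<le> i \<Longrightarrow> Suc 0 \<le> can K q i" using can_ge1[of i K q] by simp

definition cpair :: "nat \<Rightarrow> nat \<Rightarrow> nat \<times> nat \<Rightarrow> nat \<times> nat" where
  "cpair K q v = srt (can K q (fst v), can K q (snd v))"

lemma eqv_nat_can: "K \<ge> 1 \<Longrightarrow> 1 \<le> i \<Longrightarrow> 1 \<le> j \<Longrightarrow> eqv_nat K q i j \<longleftrightarrow> can K q i = can K q j"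
proof -
  assume K: "K \<ge> 1" and ij: "1 \<le> i" "1 \<le> j"
  show ?thesis
  proof (cases "i \<le> q \<or> j \<le> q")
    case True
    then show ?thesis unfolding eqv_nat_def can_def by auto
  next
    case False
    then have "i > q" "j > q" by auto
    moreover have "((i - q - 1) mod K = (j - q - 1) mod K) \<longleftrightarrow> (i mod K = j mod K)"
    proof -
      have "int (i - q - 1) - int (j - q - 1) = int i - int j" using \<open>i > q\<close> \<open>j > q\<close> by simp
      then show ?thesis by (simp only: mod_eq_iff_dvd_symdiff_nat)
    qed
    ultimately show ?thesis unfolding eqv_nat_def can_def by auto
  qed
qed

lemma srt_eq_iff: "srt (a, b) = srt (c, d) \<longleftrightarrow> (a = c \<and> b = d) \<or> (a = d \<and> b = c)"
  by (auto simp: srt_def min_def max_def split: if_splits)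

lemma eqv_wedge_cpair:
  assumes "K \<ge> 1" "v \<in> wedge" "w \<in> wedge"
  shows "eqv_wedge K q v w \<longleftrightarrow> cpair K q v = cpair K q w"
  using assms eqv_nat_can[OF assms(1)]
  by (auto simp: eqv_wedge_def cpair_def srt_eq_iff wedge_def)


context wsys begin

lemma cpair_srt: "cpair K q (srt (a, b)) = srt (can K q a, can K q b)"
  by (cases "a \<le> b") (auto simp: cpair_def srt_def min_def max_def)

lemma Pset_wedge: "x \<in> Pset K \<Longrightarrow> x \<in> wedge"
  by (auto simp: Pset_def wedge_def)

lemma cpair_id: "x \<in> Pset K \<Longrightarrow> cpair K q x = x"
  by (auto simp: Pset_def cpair_def can_id srt_def)

lemma cpair_Pset: "K \<ge> 1 \<Longrightarrow> v \<in> wedge \<Longrightarrow> cpair K q v \<in> Pset K"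
  unfolding cpair_def
  by (rule srt_in_Pset) (auto simp: wedge_def can_ge1' can_le)

lemma wclass_eq:
  assumes K: "K \<ge> 1" and v: "v \<in> wedge"
  shows "wclass K q v = {w \<in> wedge. cpair K q w = cpair K q v}"
  unfolding wclass_def
proof (rule Collect_cong)
  fix w
  show "(w \<in> wedge \<and> eqv_wedge K q v w) = (w \<in> wedge \<and> cpair K q w = cpair K q v)"
    by (cases "w \<in> wedge") (simp_all add: eqv_wedge_cpair[OF K v] eq_commute[of "cpair K q v" "cpair K q w"])
qed

lemma self_in_wclass: "K \<ge> 1 \<Longrightarrow> v \<in> wedge \<Longrightarrow> v \<in> wclass K q v"
  using wclass_eq by auto

lemma wclass_cpair: "K \<ge> 1 \<Longrightarrow> v \<in> wedge \<Longrightarrow> wclass K q (cpair K q v) = wclass K q v"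
  using wclass_eq[of K v] wclass_eq[of K "cpair K q v"] cpair_Pset[of K v] cpair_id[of "cpair K q v" K]
    Pset_wedge[of "cpair K q v" K] by simp

lemma quot_vertices_img: "K \<ge> 1 \<Longrightarrow> quot_vertices K q = wclass K q ` Pset K"
proof -
  assume K: "K \<ge> 1"
  show ?thesis unfolding quot_vertices_def
  proof
    show "wclass K q ` wedge \<subseteq> wclass K q ` Pset K"
    proof
      fix C assume "C \<in> wclass K q ` wedge"
      then obtain v where v: "v \<in> wedge" "C = wclass K q v" by blast
      then have "C = wclass K q (cpair K q v)" using wclass_cpair[OF K] by simp
      then show "C \<in> wclass K q ` Pset K" using cpair_Pset[OF K v(1)] by blast
    qed
    show "wclass K q ` Pset K \<subseteq> wclass K q ` wedge" using Pset_wedge by blast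
  qed
qed

lemma wclass_inj: "K \<ge> 1 \<Longrightarrow> inj_on (wclass K q) (Pset K)"
proof (rule inj_onI)
  fix x y assume K: "K \<ge> 1" and x: "x \<in> Pset K" and y: "y \<in> Pset K" and e: "wclass K q x = wclass K q y"
  have "x \<in> wclass K q y" using self_in_wclass[OF K Pset_wedge[OF x]] e by simp
  then have "cpair K q x = cpair K q y" using wclass_eq[OF K Pset_wedge[OF y]] by simp
  then show "x = y" using cpair_id[OF x] cpair_id[OF y] by simp
qed

end


context wsys begin

lemma quot_edges_eq:
  fixes \<Phi> :: "nat \<times> nat \<Rightarrow> label" and m :: nat
  assumes per: "periodic_wedge \<Phi> p q" and m: "m \<ge> 1"
    and ldef: "\<And>a b. l a b = \<Phi> (srt (a, b))"
    and x: "x \<in> Pset (m * p)" and y: "y \<in> Pset (m * p)"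
  shows "quot_edges \<Phi> (wclass (m * p) q x) (wclass (m * p) q y) = count_list (targ (m * p) l x) y"
proof -
  let ?K = "m * p"
  have K: "?K \<ge> 1" using m p1 by simp
  define c where "c = can ?K q"
  define v where "v = (SOME v. v \<in> wclass ?K q x)"
  have xw: "x \<in> wedge" by (rule Pset_wedge[OF x])
  have "v \<in> wclass ?K q x" unfolding v_def by (rule someI[of _ x]) (rule self_in_wclass[OF K xw])
  then have vw: "v \<in> wedge" and cv: "cpair ?K q v = x" using wclass_eq[OF K xw] cpair_id[OF x] by auto
  obtain v1 v2 where vv: "v = (v1, v2)" by (cases v)
  obtain x1 x2 where xx: "x = (x1, x2)" by (cases x)
  have v12: "1 \<le> v1" "v1 \<le> v2" using vw vv by (auto simp: wedge_def)
  have x12: "x1 \<le> x2" using x xx by (auto simp: Pset_def)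
  have "srt (c v1, c v2) = srt (x1, x2)" using cv vv xx x12 by (simp add: cpair_def c_def srt_def)
  then have sw: "(c v1 = x1 \<and> c v2 = x2) \<or> (c v1 = x2 \<and> c v2 = x1)" by (simp add: srt_eq_iff)
  have pcv: "pi (c i) = can p q i" for i unfolding c_def pi_def by (rule can_can_mult[OF p1])
  have lab: "\<Phi> v = l (pi x1) (pi x2)"
  proof -
    define s where "s = srt (can p q v1, can p q v2)"
    have sw': "s \<in> wedge" unfolding s_def srt_def wedge_def using v12 can_ge1'[of v1 p q] can_ge1'[of v2 p q] by auto
    have "cpair p q s = cpair p q v"
      unfolding s_def cpair_srt by (simp add: vv cpair_def can_idem[OF p1])
    then have "eqv_wedge p q v s" using eqv_wedge_cpair[OF p1 vw sw'] by simp
    then have "\<Phi> v = \<Phi> s" using per vw sw' unfolding periodic_wedge_def by blast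
    also have "s = srt (pi x1, pi x2)" using sw unfolding s_def by (auto simp: pcv[symmetric] srt_sym)
    finally show ?thesis by (simp add: ldef)
  qed
  have yin: "t \<in> wclass ?K q y \<longleftrightarrow> t \<in> wedge \<and> cpair ?K q t = y" for t
    using wclass_eq[OF K Pset_wedge[OF y]] cpair_id[OF y] by auto
  have c1: "c 1 = 1" unfolding c_def by (rule can_id) (use K in linarith)+
  have cs: "c (Suc i) = c (Suc (c i))" for i unfolding c_def using can_suc[OF K, of q i] by simp
  have cge: "1 \<le> c (u + 1)" for u unfolding c_def by (rule can_ge1) simp
  have wN: "(v1 + 1, v2 + 1) \<in> wedge" using v12 by (simp add: wedge_def)
  have wS: "(1, u + 1) \<in> wedge" for u by (simp add: wedge_def)
  have cpN: "cpair ?K q (v1 + 1, v2 + 1) = srt (c (x1 + 1), c (x2 + 1))"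
    using sw by (auto simp: cpair_def c_def[symmetric] cs[of v1] cs[of v2] srt_sym)
  have cpS: "cpair ?K q (1, u + 1) = (1, c (c u + 1))" for u
    using cge[of u] c1 by (simp add: cpair_def c_def[symmetric] srt_def cs[of u])
  have tg: "targ ?K l x = (case l (pi x1) (pi x2) of E \<Rightarrow> [] | N \<Rightarrow> [srt (c (x1 + 1), c (x2 + 1))]
      | S \<Rightarrow> [(1, c (x1 + 1)), (1, c (x2 + 1))])"
    by (simp add: targ_def xx c_def split: label.split)
  have qe: "quot_edges \<Phi> (wclass ?K q x) (wclass ?K q y) = length (filter (\<lambda>t. t \<in> wclass ?K q y) (edge_targets \<Phi> v))"
    unfolding quot_edges_def v_def ..
  show ?thesis
  proof (cases "l (pi x1) (pi x2)")
    case N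
    then have "edge_targets \<Phi> v = [(v1 + 1, v2 + 1)]" using lab by (simp add: edge_targets_def vv)
    then show ?thesis using N qe tg yin wN cpN by auto
  next
    case S
    then have et: "edge_targets \<Phi> v = [(1, v1 + 1), (1, v2 + 1)]" using lab by (simp add: edge_targets_def vv)
    have "length (filter (\<lambda>t. t \<in> wclass ?K q y) [(1, v1 + 1), (1, v2 + 1)])
        = (if (1, c (c v1 + 1)) = y then 1 else 0) + (if (1, c (c v2 + 1)) = y then 1 else 0)"
      using yin wS cpS by simp
    also have "\<dots> = count_list [(1, c (x1 + 1)), (1, c (x2 + 1))] y"
      using sw by auto
    finally show ?thesis using S qe tg et by simp
  next
    case E
    then have "edge_targets \<Phi> v = []" using lab by (simp add: edge_targets_def vv)
    then show ?thesis using E qe tg by simp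
  qed
qed

lemma conn:
  fixes \<Phi> :: "nat \<times> nat \<Rightarrow> label" and m :: nat
  assumes per: "periodic_wedge \<Phi> p q" and m: "m \<ge> 1"
    and ldef: "\<And>a b. l a b = \<Phi> (srt (a, b))"
  shows "char_poly (map_mat complex_of_real (adj_matrix \<Phi> (m * p) q)) = cp (Pset (m * p)) (adjm (m * p) l)"
proof -
  let ?K = "m * p"
  have K: "?K \<ge> 1" using m p1 by simp
  let ?W = "wclass ?K q"
  have bW: "bij_betw ?W (Pset ?K) (quot_vertices ?K q)"
    unfolding bij_betw_def using wclass_inj[OF K] quot_vertices_img[OF K] by simp
  have fin: "finite (quot_vertices ?K q)" using quot_vertices_img[OF K] finite_Pset by simp
  define n where "n = card (quot_vertices ?K q)"
  define f where "f = vertex_enum ?K q"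
  have bf: "bij_betw f {..<n} (quot_vertices ?K q)"
  proof -
    have "\<exists>f. bij_betw f {..<n} (quot_vertices ?K q)"
      using ex_bij_betw_nat_finite[OF fin] by (simp add: atLeast0LessThan n_def)
    then show ?thesis unfolding f_def vertex_enum_def n_def[symmetric] by (rule someI_ex)
  qed
  define g where "g = the_inv_into (Pset ?K) ?W \<circ> f"
  have bg: "bij_betw g {..<n} (Pset ?K)"
    unfolding g_def by (rule bij_betw_trans[OF bf bij_betw_the_inv_into[OF bW]])
  have gP: "g i \<in> Pset ?K" if "i < n" for i using bg that by (auto simp: bij_betw_def)
  have fg: "f i = ?W (g i)" if "i < n" for i
  proof -
    have "f i \<in> quot_vertices ?K q" using bf that by (auto simp: bij_betw_def)
    then show ?thesis unfolding g_def using bW by (simp add: f_the_inv_into_f_bij_betw)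
  qed
  have car: "adj_matrix \<Phi> ?K q \<in> carrier_mat n n" by (simp add: adj_matrix_def n_def Let_def)
  have "map_mat complex_of_real (adj_matrix \<Phi> ?K q) = mat n n (\<lambda>(i,j). adjm ?K l (g i) (g j))"
  proof (rule eq_matI)
    fix i j assume ij: "i < dim_row (mat n n (\<lambda>(i,j). adjm ?K l (g i) (g j)))" "j < dim_col (mat n n (\<lambda>(i,j). adjm ?K l (g i) (g j)))"
    then have ij': "i < n" "j < n" by auto
    have "map_mat complex_of_real (adj_matrix \<Phi> ?K q) $$ (i,j) = of_real (real (quot_edges \<Phi> (f j) (f i)))"
      using ij' car by (simp add: adj_matrix_def Let_def f_def n_def)
    also have "\<dots> = of_nat (count_list (targ ?K l (g j)) (g i))"
      using fg[OF ij'(1)] fg[OF ij'(2)] quot_edges_eq[OF per m ldef gP[OF ij'(2)] gP[OF ij'(1)]] by simp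
    finally show "map_mat complex_of_real (adj_matrix \<Phi> ?K q) $$ (i,j) = mat n n (\<lambda>(i,j). adjm ?K l (g i) (g j)) $$ (i,j)"
      using ij' by (simp add: adjm_def)
  qed (use car in auto)
  then show ?thesis using cp_bij[OF finite_Pset bg] by simp
qed

end


theorem theorem5p1:
  fixes \<Phi> :: "(nat \<times> nat) \<Rightarrow> label" and p q :: nat
  assumes "periodic_wedge \<Phi> p q"
  shows "\<forall>k::nat. k \<ge> 1 \<longrightarrow>
    (\<exists>ns :: nat list. \<exists>d :: nat. (\<forall>n\<in>set ns. n \<ge> 1) \<and>
       map_poly complex_of_real (char_poly (adj_matrix \<Phi> (k * p) q)) =
       map_poly complex_of_real (char_poly (adj_matrix \<Phi> p q)) *
       prod_list (map cyclotomic ns) * monom 1 d)"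
proof (intro allI impI)
  fix k :: nat assume k: "k \<ge> 1"
  have p: "p \<ge> 1" using assms by (simp add: periodic_wedge_def)
  have W: "wsys p k" by (rule wsys.intro[OF p k])
  define l where "l a b = \<Phi> (srt (a, b))" for a b
  have ldef: "\<And>a b. l a b = \<Phi> (srt (a, b))" by (simp add: l_def)
  have sym: "\<And>a b. l a b = l b a" by (simp add: l_def srt_sym)
  note mc = wsys.main_cyc[where p=p and k=k and q=q and l=l, OF W sym]
  note cnk = wsys.conn[where p=p and k=k and q=q and l=l and m=k and \<Phi>=\<Phi>, OF W assms k ldef]
  note cn1 = wsys.conn[where p=p and k=k and q=q and l=l and m=1 and \<Phi>=\<Phi>, OF W assms le_refl ldef]
  from mc obtain G where G: "cyc_form G"
    "cp (wsys.Pset q (k * p)) (wsys.adjm p q (k * p) l) = cp (wsys.Pset q p) (wsys.adjm p q p l) * G"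
    by blast
  obtain ns d where nsd: "\<forall>n\<in>set ns. n \<ge> 1" "G = prod_list (map cyclotomic ns) * monom 1 d"
    using G(1) unfolding cyc_form_def by blast
  have ck: "map_poly complex_of_real (char_poly (adj_matrix \<Phi> (k * p) q)) = cp (wsys.Pset q (k * p)) (wsys.adjm p q (k * p) l)"
  proof -
    have "adj_matrix \<Phi> (k * p) q \<in> carrier_mat (card (quot_vertices (k * p) q)) (card (quot_vertices (k * p) q))"
      by (simp add: adj_matrix_def Let_def)
    from of_real_hom.char_poly_hom[OF this] have e: "char_poly (map_mat complex_of_real (adj_matrix \<Phi> (k * p) q)) = map_poly complex_of_real (char_poly (adj_matrix \<Phi> (k * p) q))" .
    show ?thesis using trans[OF e[symmetric] cnk] by simp
  qed
  have c1: "map_poly complex_of_real (char_poly (adj_matrix \<Phi> p q)) = cp (wsys.Pset q p) (wsys.adjm p q p l)"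
  proof -
    have "adj_matrix \<Phi> (1 * p) q \<in> carrier_mat (card (quot_vertices (1 * p) q)) (card (quot_vertices (1 * p) q))"
      by (simp add: adj_matrix_def Let_def)
    from of_real_hom.char_poly_hom[OF this] have e: "char_poly (map_mat complex_of_real (adj_matrix \<Phi> (1 * p) q)) = map_poly complex_of_real (char_poly (adj_matrix \<Phi> (1 * p) q))" .
    show ?thesis using trans[OF e[symmetric] cn1] by simp
  qed
  show "\<exists>ns d. (\<forall>n\<in>set ns. n \<ge> 1) \<and>
       map_poly complex_of_real (char_poly (adj_matrix \<Phi> (k * p) q)) =
       map_poly complex_of_real (char_poly (adj_matrix \<Phi> p q)) *
       prod_list (map cyclotomic ns) * monom 1 d"
    using nsd G(2) ck c1 by (intro exI[of _ ns] exI[of _ d]) (simp add: mult.assoc)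
qed


end
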